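(* Let $1<p_0<\infty$, $\vec p=(p_1,\dots,p_n)$ with $1<p_i<\infty$, and $\frac{n}{p_0}<\sum_{i=1}^n\frac1{p_i}$. Let $f\in\mathcal{B}^{p_0'}_{\vec p\,'}(\mathbb{R}^n)$. Then $f$ can be written as $$f=\sum_{Q\in\mathcal D}\lambda_Q b_Q,$$ where each $\lambda_Q\ge0$ with $\sum_{Q\in\mathcal D}\lambda_Q\le 2\cdot 3^n\|f\|_{\mathcal{B}^{p_0'}_{\vec p\,'}(\mathbb{R}^n)}$, and each $b_Q$ is a $(p_0',\vec p\,')$-block associated with the cube $3Q$, i.e. $\operatorname{supp} b_Q\subset 3Q$ and $\|b_Q\|_{L^{\vec p\,'}(\mathbb{R}^n)}\le|3Q|^{\frac1{p_0}-\frac1n\sum_{i=1}^n\frac1{p_i}}$.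
   Context: $L^{\vec q}(\mathbb{R}^n)$ denotes the mixed-norm Lebesgue space with norm $\|f\|_{L^{\vec q}}=\big(\int_{\mathbb{R}}\cdots(\int_{\mathbb{R}}|f|^{q_1}dx_1)^{q_2/q_1}\cdots dx_n\big)^{1/q_n}$; $\vec p\,'=(p_1',\dots,p_n')$ with $1/p_i+1/p_i'=1$, and $p_0'$ is the conjugate of $p_0$. Cubes have sides parallel to the axes; $Q(x,r)$ is the open cube with center $x$ and side length $r$, and $cQ(x,r)=Q(x,cr)$. A measurable function $b$ is a $(p_0',\vec p\,')$-block if there is a cube $Q$ with $\operatorname{supp}b\subset Q$ and $\|b\|_{L^{\vec p\,'}(\mathbb{R}^n)}\le|Q|^{\frac1{p_0}-\frac1n\sum_{i=1}^n\frac1{p_i}}$. The block space $\mathcal{B}^{p_0'}_{\vec p\,'}(\mathbb{R}^n)$ consists of measurable functions $f=\sum_{i=1}^\infty\lambda_ib_i$ (series converging in $L^1_{\mathrm{loc}}$ and a.e.) with $\{\lambda_i\}\in\ell^1$ and each $b_i$ a $(p_0',\vec p\,')$-block, normed by $\|f\|_{\mathcal{B}^{p_0'}_{\vec p\,'}}=\inf\|\{\lambda_i\}\|_{\ell^1}$ over all such decompositions. $\mathcal D=\bigcup_{k\in\mathbb Z}\{2^{-k}(m+[0,1)^n):m\in\mathbb Z^n\}$ is the family of dyadic cubes. *)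

theory Defs
  imports "HOL-Analysis.Analysis"
begin

definition enn_powr :: "ennreal \<Rightarrow> real \<Rightarrow> ennreal" where
  "enn_powr e a = (if e = \<infinity> then \<infinity> else ennreal (enn2real e powr a))"

definition conj_exp :: "real \<Rightarrow> real" where
  "conj_exp p = p / (p - 1)"

definition coord_upd :: "real^'n \<Rightarrow> 'n \<Rightarrow> real \<Rightarrow> real^'n" where
  "coord_upd x i t = (\<chi> j. if j = i then t else x $ j)"

definition mixed_step :: "('n::finite \<Rightarrow> real) \<Rightarrow> 'n \<Rightarrow> (real^'n \<Rightarrow> ennreal) \<Rightarrow> (real^'n \<Rightarrow> ennreal)" where
  "mixed_step q i g = (\<lambda>x. enn_powr (\<integral>\<^sup>+ t. enn_powr (g (coord_upd x i t)) (q i) \<partial>lborel) (1 / q i))"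

text \<open>Mixed-norm Lebesgue norm: integrate first in the smallest coordinate
  (x_1), then the next one, ..., finally in the largest (x_n).  The result of
  the iteration no longer depends on the point, we evaluate it at 0.\<close>
definition mixed_norm :: "('n::{finite,linorder} \<Rightarrow> real) \<Rightarrow> (real^('n::{finite,linorder}) \<Rightarrow> real) \<Rightarrow> ennreal" where
  "mixed_norm q f =
     fold (mixed_step q) (sorted_list_of_set (UNIV :: 'n set)) (\<lambda>x. ennreal \<bar>f x\<bar>) 0"

definition open_cube :: "real^'n \<Rightarrow> real \<Rightarrow> (real^'n) set" where
  "open_cube c r = {y. \<forall>i. \<bar>y $ i - c $ i\<bar> < r / 2}"

definition block_exp :: "real \<Rightarrow> ('n::finite \<Rightarrow> real) \<Rightarrow> real" where
  "block_exp p0 p = 1 / p0 - (1 / real CARD('n)) * (\<Sum>i\<in>UNIV. 1 / p i)"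

definition block_on :: "real \<Rightarrow> ('n::{finite,linorder} \<Rightarrow> real) \<Rightarrow> (real^('n::{finite,linorder})) set \<Rightarrow> (real^('n::{finite,linorder}) \<Rightarrow> real) \<Rightarrow> bool" where
  "block_on p0 p Q b \<longleftrightarrow>
     b \<in> borel_measurable borel \<and>
     {x. b x \<noteq> 0} \<subseteq> Q \<and>
     mixed_norm (\<lambda>i. conj_exp (p i)) b \<le> ennreal (measure lborel Q powr block_exp p0 p)"

definition is_block :: "real \<Rightarrow> ('n::{finite,linorder} \<Rightarrow> real) \<Rightarrow> (real^('n::{finite,linorder}) \<Rightarrow> real) \<Rightarrow> bool" where
  "is_block p0 p b \<longleftrightarrow> (\<exists>c r. r > 0 \<and> block_on p0 p (open_cube c r) b)"

definition block_decomp :: "real \<Rightarrow> ('n::{finite,linorder} \<Rightarrow> real) \<Rightarrow> (real^('n::{finite,linorder}) \<Rightarrow> real)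
    \<Rightarrow> (nat \<Rightarrow> real) \<Rightarrow> (nat \<Rightarrow> real^('n::{finite,linorder}) \<Rightarrow> real) \<Rightarrow> bool" where
  "block_decomp p0 p f lam b \<longleftrightarrow>
     summable (\<lambda>i. \<bar>lam i\<bar>) \<and>
     (\<forall>i. is_block p0 p (b i)) \<and>
     (AE x in lborel. (\<lambda>N. \<Sum>i<N. lam i * b i x) \<longlonglongrightarrow> f x) \<and>
     (\<forall>K. compact K \<longrightarrow>
        (\<lambda>N. \<integral>\<^sup>+ x. indicator K x * ennreal \<bar>f x - (\<Sum>i<N. lam i * b i x)\<bar> \<partial>lborel) \<longlonglongrightarrow> 0)"

definition block_space :: "real \<Rightarrow> ('n::{finite,linorder} \<Rightarrow> real) \<Rightarrow> (real^('n::{finite,linorder}) \<Rightarrow> real) set" where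
  "block_space p0 p = {f. f \<in> borel_measurable borel \<and> (\<exists>lam b. block_decomp p0 p f lam b)}"

definition block_norm :: "real \<Rightarrow> ('n::{finite,linorder} \<Rightarrow> real) \<Rightarrow> (real^('n::{finite,linorder}) \<Rightarrow> real) \<Rightarrow> real" where
  "block_norm p0 p f = Inf {(\<Sum>i. \<bar>lam i\<bar>) | lam b. block_decomp p0 p f lam b}"

definition dyadic_cube :: "int \<Rightarrow> int^'n \<Rightarrow> (real^'n) set" where
  "dyadic_cube k m = {x. \<forall>i. 2 powr (- k) * of_int (m $ i) \<le> x $ i \<and>
                             x $ i < 2 powr (- k) * (of_int (m $ i) + 1)}"

definition dyadic_center :: "int \<Rightarrow> int^'n \<Rightarrow> real^'n" where
  "dyadic_center k m = (\<chi> i. 2 powr (- k) * (of_int (m $ i) + 1 / 2))"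

definition dyadic_cubes :: "(real^'n) set set" where
  "dyadic_cubes = {dyadic_cube k m | k m. True}"

end

theory Submission
  imports Defs
begin


lemma enn_powr_0[simp]: "a > 0 \<Longrightarrow> enn_powr 0 a = 0"
  by (simp add: enn_powr_def)

lemma enn_powr_1[simp]: "enn_powr x 1 = x"
  by (cases x) (auto simp: enn_powr_def)

lemma enn_powr_top[simp]: "enn_powr \<infinity> a = \<infinity>"
  by (simp add: enn_powr_def)

lemma enn_powr_ennreal: "x \<ge> 0 \<Longrightarrow> enn_powr (ennreal x) a = ennreal (x powr a)"
  by (simp add: enn_powr_def)

lemma enn_powr_mono: "a \<ge> 0 \<Longrightarrow> x \<le> y \<Longrightarrow> enn_powr x a \<le> enn_powr y a"
  by (cases x; cases y) (auto simp: enn_powr_def powr_mono2 top_unique)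

lemma measurable_enn_powr[measurable]:
  assumes [measurable]: "g \<in> borel_measurable M"
  shows "(\<lambda>x. enn_powr (g x) a) \<in> borel_measurable M"
  unfolding enn_powr_def by measurable

lemma continuous_coord_upd: "continuous_on UNIV (\<lambda>(x, t). coord_upd (x::real^'n) i t)"
  unfolding coord_upd_def case_prod_unfold
proof (intro continuous_on_vec_lambda)
  fix j
  show "continuous_on UNIV (\<lambda>z. if j = i then snd z else fst z $ j)"
    by (cases "j = i") (auto intro!: continuous_intros)
qed

lemma measurable_coord_upd[measurable]:
  "(\<lambda>(x, t). coord_upd (x::real^'n) i t) \<in> measurable (borel \<Otimes>\<^sub>M lborel) borel"
proof -
  have "(\<lambda>(x, t). coord_upd (x::real^'n) i t) \<in> measurable (borel \<Otimes>\<^sub>M borel) borel"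
    unfolding borel_prod by (rule borel_measurable_continuous_onI[OF continuous_coord_upd])
  moreover have "sets (borel \<Otimes>\<^sub>M lborel) = sets (borel \<Otimes>\<^sub>M (borel::real measure))"
    by (intro sets_pair_measure_cong) auto
  ultimately show ?thesis
    by (subst measurable_cong_sets[OF _ refl]) auto
qed

lemma measurable_mixed_step[measurable]:
  assumes [measurable]: "g \<in> borel_measurable (borel :: (real^'n) measure)"
  shows "mixed_step q i g \<in> borel_measurable borel"
proof -
  have "(\<lambda>(x, t). enn_powr (g (coord_upd (x::real^'n) i t)) (q i)) \<in> borel_measurable (borel \<Otimes>\<^sub>M lborel)"
    using measurable_compose[OF measurable_coord_upd assms] by measurable
  then have "(\<lambda>x. \<integral>\<^sup>+ t. enn_powr (g (coord_upd (x::real^'n) i t)) (q i) \<partial>lborel) \<in> borel_measurable borel"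
    by (rule lborel.borel_measurable_nn_integral[of "\<lambda>x t. _ x t"]) 
  then show ?thesis unfolding mixed_step_def by measurable
qed


definition Tb :: "'b \<Rightarrow> (('b \<Rightarrow> real) \<Rightarrow> ennreal) \<Rightarrow> (('b \<Rightarrow> real) \<Rightarrow> ennreal)" where
  "Tb b H = (\<lambda>w. \<integral>\<^sup>+ y. H (w(b := y)) \<partial>lborel)"

lemma measurable_Tb:
  assumes "b \<notin> I" and H: "H \<in> borel_measurable (PiM (insert b I) (\<lambda>_. lborel))"
  shows "Tb b H \<in> borel_measurable (PiM I (\<lambda>_. lborel))"
proof -
  have "(\<lambda>z. (fst z) (b := snd z)) \<in> measurable (PiM I (\<lambda>_. lborel) \<Otimes>\<^sub>M lborel) (PiM (insert b I) (\<lambda>_. lborel))"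
    by (rule measurable_fun_upd[where J=I]) auto
  from measurable_compose[OF this H]
  have "case_prod (\<lambda>w y. H (w(b := y))) \<in> borel_measurable (PiM I (\<lambda>_. lborel) \<Otimes>\<^sub>M lborel)"
    by (simp add: case_prod_unfold)
  then show ?thesis unfolding Tb_def
    by (rule lborel.borel_measurable_nn_integral)
qed

lemma PiM_fold_Tb:
  fixes xs :: "'b list"
  assumes "distinct xs" "H \<in> borel_measurable (PiM (set xs) (\<lambda>_. lborel))"
  shows "integral\<^sup>N (PiM (set xs) (\<lambda>_. lborel)) H = fold Tb xs H (\<lambda>_. undefined)"
  using assms
proof (induction xs arbitrary: H)
  case Nil
  interpret product_sigma_finite "\<lambda>_. lborel" by standard
  show ?case by (simp add: nn_integral_empty)
next
  case (Cons y ys)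
  interpret product_sigma_finite "\<lambda>_::'b. lborel" by standard
  have "integral\<^sup>N (PiM (set (y # ys)) (\<lambda>_. lborel)) H
      = integral\<^sup>N (PiM (set ys) (\<lambda>_. lborel)) (Tb y H)"
    using Cons.prems by (simp add: product_nn_integral_insert Tb_def)
  also have "\<dots> = fold Tb ys (Tb y H) (\<lambda>_. undefined)"
    using Cons.prems by (intro Cons.IH) (auto intro: measurable_Tb)
  finally show ?case by simp
qed

definition invar :: "'n set \<Rightarrow> (real^'n \<Rightarrow> 'a) \<Rightarrow> bool" where
  "invar S G \<longleftrightarrow> (\<forall>x y. (\<forall>j. j \<notin> S \<longrightarrow> x $ j = y $ j) \<longrightarrow> G x = G y)"

lemma invar_step:
  fixes G :: "real^'n \<Rightarrow> ennreal"
  shows "invar S G \<Longrightarrow> invar (insert a S) (mixed_step q a G)"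
  unfolding invar_def mixed_step_def
proof (intro allI impI)
  fix x y :: "real^'n"
  assume G: "\<forall>x y. (\<forall>j. j \<notin> S \<longrightarrow> x $ j = y $ j) \<longrightarrow> G x = G y"
    and xy: "\<forall>j. j \<notin> insert a S \<longrightarrow> x $ j = y $ j"
  have "\<And>t. G (coord_upd x a t) = G (coord_upd y a t)"
    using G xy by (auto simp: coord_upd_def)
  then show "enn_powr (\<integral>\<^sup>+ t. enn_powr (G (coord_upd x a t)) (q a) \<partial>lborel) (1 / q a) =
             enn_powr (\<integral>\<^sup>+ t. enn_powr (G (coord_upd y a t)) (q a) \<partial>lborel) (1 / q a)"
    by simp
qed

lemma invar_fold:
  fixes G :: "real^'n \<Rightarrow> ennreal"
  shows "invar S G \<Longrightarrow> invar (S \<union> set xs) (fold (mixed_step q) xs G)"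
proof (induction xs arbitrary: S G)
  case Nil then show ?case by simp
next
  case (Cons a xs)
  from Cons.IH[OF invar_step[OF Cons.prems]] show ?case by simp
qed

lemma fold_const:
  fixes G :: "real^'n::{finite,linorder} \<Rightarrow> ennreal"
  shows "fold (mixed_step q) (sorted_list_of_set UNIV) G x = fold (mixed_step q) (sorted_list_of_set UNIV) G y"
proof -
  have "invar {} G" unfolding invar_def
    by (metis empty_iff vec_eq_iff)
  from invar_fold[OF this, of "sorted_list_of_set UNIV" q] show ?thesis
    by (simp add: invar_def)
qed

definition Phi :: "(real^'n \<Rightarrow> real) \<Rightarrow> real^'n" where
  "Phi w = (\<Sum>b\<in>Basis. w b *\<^sub>R b)"

lemma Phi_nth: "Phi w $ j = w (axis j 1)"
proof -
  have "Phi w $ j = Phi w \<bullet> axis j 1" by (simp add: cart_eq_inner_axis)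
  also have "\<dots> = (\<Sum>b\<in>Basis. w b * (b \<bullet> axis j 1))"
    by (simp add: Phi_def inner_sum_left)
  also have "\<dots> = (\<Sum>b\<in>Basis. if b = axis j 1 then w b else 0)"
    by (intro sum.cong) (auto simp: inner_Basis axis_in_Basis_iff)
  also have "\<dots> = w (axis j 1)" by (simp add: axis_in_Basis_iff)
  finally show ?thesis .
qed

lemma Phi_upd: "Phi (w(axis i 1 := t)) = coord_upd (Phi w) i t"
  by (rule vec_eq_iff[THEN iffD2]) (simp add: Phi_nth coord_upd_def axis_eq_axis)

lemma mixed_step_one: "mixed_step (\<lambda>_. 1) i G = (\<lambda>x. \<integral>\<^sup>+ t. G (coord_upd x i t) \<partial>lborel)"
  by (simp add: mixed_step_def)

lemma fold_Tb_Phi: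
  fixes G :: "real^'n \<Rightarrow> ennreal"
  shows "fold Tb (map (\<lambda>i. axis i 1) xs) (G \<circ> Phi) = fold (mixed_step (\<lambda>_. 1)) xs G \<circ> Phi"
proof (induction xs arbitrary: G)
  case Nil then show ?case by simp
next
  case (Cons a xs)
  have "Tb (axis a 1) (G \<circ> Phi) = mixed_step (\<lambda>_. 1) a G \<circ> Phi"
    by (simp add: Tb_def mixed_step_one fun_eq_iff Phi_upd)
  then have "fold Tb (map (\<lambda>i. axis i 1) xs) (Tb (axis a 1) (G \<circ> Phi))
     = fold (mixed_step (\<lambda>_. 1)) xs (mixed_step (\<lambda>_. 1) a G) \<circ> Phi"
    using Cons.IH[of "mixed_step (\<lambda>_. 1) a G"] by (simp only:)
  then show ?case unfolding comp_def by simp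
qed

lemma measurable_Phi[measurable]: "Phi \<in> measurable (PiM Basis (\<lambda>_. lborel)) (borel :: (real^'n) measure)"
  unfolding Phi_def by measurable

lemma tonelli_fold:
  fixes g :: "real^'n::{finite,linorder} \<Rightarrow> ennreal"
  assumes [measurable]: "g \<in> borel_measurable borel"
  shows "integral\<^sup>N lborel g = fold (mixed_step (\<lambda>_. 1)) (sorted_list_of_set UNIV) g x"
proof -
  let ?xs = "sorted_list_of_set (UNIV :: 'n::{finite,linorder} set)"
  let ?ys = "map (\<lambda>i. axis i (1::real)) ?xs"
  have dist: "distinct ?ys"
    by (simp add: distinct_map inj_on_def axis_eq_axis)
  have setys: "set ?ys = Basis"
    by (auto simp: Basis_vec_def)
  have "integral\<^sup>N lborel g = integral\<^sup>N (PiM Basis (\<lambda>_. lborel)) (g \<circ> Phi)"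
    by (subst lborel_eq) (simp add: nn_integral_distr Phi_def[abs_def] comp_def)
  also have "\<dots> = fold Tb ?ys (g \<circ> Phi) (\<lambda>_. undefined)"
    using PiM_fold_Tb[OF dist, of "g \<circ> Phi"] setys by simp
  also have "\<dots> = fold (mixed_step (\<lambda>_. 1)) ?xs g (Phi (\<lambda>_. undefined))"
    by (simp add: fold_Tb_Phi)
  also have "\<dots> = fold (mixed_step (\<lambda>_. 1)) ?xs g x"
    by (rule fold_const)
  finally show ?thesis .
qed


lemma enn_powr_powr:
  assumes "a > 0" "b > 0"
  shows "enn_powr (enn_powr x a) b = enn_powr x (a * b)"
  using assms by (cases x) (auto simp: enn_powr_def powr_powr)

lemma enn_powr_inv1: "a > 0 \<Longrightarrow> enn_powr (enn_powr x a) (1/a) = x"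
  by (simp add: enn_powr_powr)

lemma enn_powr_inv2: "a > 0 \<Longrightarrow> enn_powr (enn_powr x (1/a)) a = x"
  by (simp add: enn_powr_powr)

lemma enn_powr_le_iff: "a > 0 \<Longrightarrow> enn_powr x a \<le> y \<longleftrightarrow> x \<le> enn_powr y (1/a)"
  by (metis enn_powr_inv1 enn_powr_inv2 enn_powr_mono less_eq_real_def zero_less_divide_1_iff)

lemma enn_powr_le_cancel: "a > 0 \<Longrightarrow> enn_powr x a \<le> enn_powr y a \<longleftrightarrow> x \<le> y"
  by (metis enn_powr_inv1 enn_powr_mono less_eq_real_def zero_less_divide_1_iff)

lemma enn_powr_SUP:
  assumes "a > 0"
  shows "enn_powr (SUP i\<in>I. f i) a = (SUP i\<in>I. enn_powr (f i) a)"
proof (rule antisym)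
  show "(SUP i\<in>I. enn_powr (f i) a) \<le> enn_powr (SUP i\<in>I. f i) a"
    using assms by (intro SUP_least enn_powr_mono) (auto intro: SUP_upper)
  have "(SUP i\<in>I. f i) \<le> enn_powr (SUP i\<in>I. enn_powr (f i) a) (1/a)"
  proof (rule SUP_least)
    fix i assume "i \<in> I"
    then have "enn_powr (f i) a \<le> (SUP i\<in>I. enn_powr (f i) a)" by (rule SUP_upper)
    then show "f i \<le> enn_powr (SUP i\<in>I. enn_powr (f i) a) (1/a)"
      using enn_powr_le_iff[OF assms] by blast
  qed
  then show "enn_powr (SUP i\<in>I. f i) a \<le> (SUP i\<in>I. enn_powr (f i) a)"
    using enn_powr_le_iff[OF assms] by blast
qed

lemma enn_powr_mult:
  assumes "a > 0"
  shows "enn_powr (x * y) a = enn_powr x a * enn_powr y a"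
  using assms
  by (cases x; cases y)
     (auto simp: enn_powr_def ennreal_mult_top ennreal_top_mult powr_mult simp flip: ennreal_mult)

lemma enn_powr_eq_0_iff: "a > 0 \<Longrightarrow> enn_powr x a = 0 \<longleftrightarrow> x = 0"
  by (cases x) (auto simp: enn_powr_def)

lemma enn_powr_eq_top_iff: "a > 0 \<Longrightarrow> enn_powr x a = \<infinity> \<longleftrightarrow> x = \<infinity>"
  by (cases x) (auto simp: enn_powr_def)


lemma conv0:
  fixes X Y a q :: real
  assumes "X \<ge> 0" "Y \<ge> 0" "0 \<le> a" "a \<le> 1" "q \<ge> 1"
  shows "(a * X + (1 - a) * Y) powr q \<le> a * X powr q + (1 - a) * Y powr q"
proof (cases "X = 0 \<or> Y = 0")
  case True
  have aq: "a powr q \<le> a" and bq: "(1 - a) powr q \<le> 1 - a"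
    using assms powr_mono'[of 1 q a] powr_mono'[of 1 q "1 - a"] by auto
  show ?thesis
  proof (cases "X = 0")
    case True
    then have "(a * X + (1 - a) * Y) powr q = (1 - a) powr q * Y powr q"
      using assms by (simp add: powr_mult)
    also have "\<dots> \<le> (1 - a) * Y powr q"
      using bq by (intro mult_right_mono) auto
    finally show ?thesis using True assms by simp
  next
    case False
    then have Y: "Y = 0" using \<open>X = 0 \<or> Y = 0\<close> by auto
    then have "(a * X + (1 - a) * Y) powr q = a powr q * X powr q"
      using assms by (simp add: powr_mult)
    also have "\<dots> \<le> a * X powr q"
      using aq by (intro mult_right_mono) auto
    finally show ?thesis using Y assms by simp
  qed
next
  case False
  then have "X > 0" "Y > 0" using assms by auto
  from convex_onD[OF powr_convex[OF assms(5)], of "1 - a" X Y] this assms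
  show ?thesis by (simp add: algebra_simps)
qed

lemma helper_alg: "(S::real) \<noteq> 0 \<Longrightarrow> (C * S) * ((A / S) * (X / P)) = C * (X * (A / P))"
  by (simp add: field_simps)

lemma R1:
  fixes x y A B q :: real
  assumes "x \<ge> 0" "y \<ge> 0" "A > 0" "B > 0" "q \<ge> 1"
  shows "(x + y) powr q \<le> (A + B) powr (q - 1) * (x powr q * A powr (1 - q) + y powr q * B powr (1 - q))"
proof -
  define a where "a = A / (A + B)"
  have a01: "0 \<le> a" "a \<le> 1" using assms by (auto simp: a_def)
  have 1: "1 - a = B / (A + B)" using assms by (simp add: a_def field_simps)
  have xa: "(A + B) * (a * (x / A)) = x" using assms by (simp add: a_def)
  have yb: "(A + B) * ((1 - a) * (y / B)) = y" using assms by (simp add: 1)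
  have xy: "x + y = (A + B) * (a * (x / A) + (1 - a) * (y / B))"
    using xa yb by (simp add: distrib_left)
  have "(x + y) powr q = (A + B) powr q * (a * (x / A) + (1 - a) * (y / B)) powr q"
    using assms a01 by (simp add: xy powr_mult)
  also have "\<dots> \<le> (A + B) powr q * (a * (x / A) powr q + (1 - a) * (y / B) powr q)"
    using assms a01 by (intro mult_left_mono conv0) auto
  also have "\<dots> = (A + B) powr (q - 1) * (x powr q * A powr (1 - q) + y powr q * B powr (1 - q))"
  proof -
    have e1: "(A + B) powr q = (A + B) powr (q - 1) * (A + B)"
      using assms by (simp add: powr_diff)
    have e2: "A / A powr q = A powr (1 - q)" "B / B powr q = B powr (1 - q)"
      using assms by (simp_all add: powr_diff)
    have nz: "A + B \<noteq> 0" "A powr q \<noteq> 0" "B powr q \<noteq> 0" using assms by auto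
    have t1: "(A + B) powr q * (a * (x / A) powr q) = (A + B) powr (q - 1) * (x powr q * (A / A powr q))"
      using assms nz unfolding e1 a_def by (simp add: powr_divide helper_alg)
    have t2: "(A + B) powr q * ((1 - a) * (y / B) powr q) = (A + B) powr (q - 1) * (y powr q * (B / B powr q))"
      using assms nz unfolding e1 1 by (simp add: powr_divide helper_alg)
    show ?thesis using t1 t2 by (simp add: e2 distrib_left)
  qed
  finally show ?thesis .
qed

lemma enn_powr_top'[simp]: "enn_powr top a = top"
  by (simp add: enn_powr_def)

lemma R2:
  fixes x y :: ennreal and A B q :: real
  assumes "A > 0" "B > 0" "q \<ge> 1"
  shows "enn_powr (x + y) q \<le> ennreal ((A + B) powr (q - 1)) *
           (enn_powr x q * ennreal (A powr (1 - q)) + enn_powr y q * ennreal (B powr (1 - q)))"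
proof (cases "x = \<infinity> \<or> y = \<infinity>")
  case True
  have pos: "ennreal ((A + B) powr (q - 1)) > 0" "ennreal (A powr (1 - q)) > 0" "ennreal (B powr (1 - q)) > 0"
    using assms by auto
  have h: "enn_powr x q * ennreal (A powr (1 - q)) + enn_powr y q * ennreal (B powr (1 - q)) = top"
    using True pos assms by (auto simp: ennreal_mult_eq_top_iff)
  have rhs: "ennreal ((A + B) powr (q - 1)) *
           (enn_powr x q * ennreal (A powr (1 - q)) + enn_powr y q * ennreal (B powr (1 - q))) = top"
    unfolding h using pos by simp
  show ?thesis unfolding rhs by simp
next
  case False
  then obtain r s where r: "x = ennreal r" "r \<ge> 0" and s: "y = ennreal s" "s \<ge> 0"
    using False by (cases x; cases y) auto
  have "(r + s) powr q \<le> (A + B) powr (q - 1) * (r powr q * A powr (1 - q) + s powr q * B powr (1 - q))"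
    using R1[of r s A B q] r s assms by simp
  moreover have "enn_powr (x + y) q = ennreal ((r + s) powr q)"
    using r s by (simp add: enn_powr_ennreal flip: ennreal_plus)
  moreover have "ennreal ((A + B) powr (q - 1)) *
           (enn_powr x q * ennreal (A powr (1 - q)) + enn_powr y q * ennreal (B powr (1 - q)))
      = ennreal ((A + B) powr (q - 1) * (r powr q * A powr (1 - q) + s powr q * B powr (1 - q)))"
    using r s assms by (simp add: enn_powr_ennreal ennreal_mult' ennreal_plus)
  ultimately show ?thesis by (simp add: ennreal_leI)
qed

definition Nq :: "real \<Rightarrow> (real \<Rightarrow> ennreal) \<Rightarrow> ennreal" where
  "Nq q u = enn_powr (\<integral>\<^sup>+ t. enn_powr (u t) q \<partial>lborel) (1 / q)"

lemma mixed_step_Nq: "mixed_step q i g x = Nq (q i) (\<lambda>t. g (coord_upd x i t))"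
  by (simp add: mixed_step_def Nq_def)

lemma Nq_mono: "q > 0 \<Longrightarrow> (\<And>t. u t \<le> v t) \<Longrightarrow> Nq q u \<le> Nq q v"
  unfolding Nq_def by (intro enn_powr_mono nn_integral_mono) auto

lemma Nq_zero[simp]: "q > 0 \<Longrightarrow> Nq q (\<lambda>_. 0) = 0"
  by (simp add: Nq_def)

lemma Nq_cmult:
  assumes "q > 0" and [measurable]: "u \<in> borel_measurable lborel"
  shows "Nq q (\<lambda>t. c * u t) = c * Nq q u"
proof -
  have "Nq q (\<lambda>t. c * u t) = enn_powr (\<integral>\<^sup>+ t. enn_powr c q * enn_powr (u t) q \<partial>lborel) (1 / q)"
    using assms by (simp add: Nq_def enn_powr_mult)
  also have "\<dots> = enn_powr (enn_powr c q * (\<integral>\<^sup>+ t. enn_powr (u t) q \<partial>lborel)) (1 / q)"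
    by (subst nn_integral_cmult) auto
  also have "\<dots> = c * Nq q u"
    using assms by (simp add: enn_powr_mult enn_powr_inv1 Nq_def)
  finally show ?thesis .
qed

lemma Nq_eq_0_AE:
  assumes "q > 0" and [measurable]: "u \<in> borel_measurable lborel" and "Nq q u = 0"
  shows "AE t in lborel. u t = 0"
proof -
  have "(\<integral>\<^sup>+ t. enn_powr (u t) q \<partial>lborel) = 0"
    using assms by (simp add: Nq_def enn_powr_eq_0_iff)
  then have "AE t in lborel. enn_powr (u t) q = 0"
    by (subst (asm) nn_integral_0_iff_AE) auto
  then show ?thesis using assms by (simp add: enn_powr_eq_0_iff)
qed

lemma mink2:
  assumes q: "q \<ge> 1" and [measurable]: "u \<in> borel_measurable lborel" "v \<in> borel_measurable lborel"
  shows "Nq q (\<lambda>t. u t + v t) \<le> Nq q u + Nq q v"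
proof -
  have q0: "q > 0" using q by simp
  consider "Nq q u = \<infinity> \<or> Nq q v = \<infinity>" | "Nq q u = 0" | "Nq q v = 0"
    | a b where "Nq q u = ennreal a" "a > 0" "Nq q v = ennreal b" "b > 0"
  proof -
    assume c1: "Nq q u = \<infinity> \<or> Nq q v = \<infinity> \<Longrightarrow> thesis"
      and c2: "Nq q u = 0 \<Longrightarrow> thesis" and c3: "Nq q v = 0 \<Longrightarrow> thesis"
      and c4: "\<And>a b. Nq q u = ennreal a \<Longrightarrow> a > 0 \<Longrightarrow> Nq q v = ennreal b \<Longrightarrow> b > 0 \<Longrightarrow> thesis"
    show thesis
    proof (cases "Nq q u"; cases "Nq q v")
      fix a b assume "Nq q u = ennreal a" "0 \<le> a" "Nq q v = ennreal b" "0 \<le> b"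
      then show thesis using c2 c3 c4[of a b] by (cases "a = 0"; cases "b = 0") auto
    qed (use c1 in auto)
  qed
  then show ?thesis
  proof cases
    case 1 then show ?thesis by auto
  next
    case 2
    then have "AE t in lborel. u t = 0" using q0 by (intro Nq_eq_0_AE) auto
    then have "(\<integral>\<^sup>+ t. enn_powr (u t + v t) q \<partial>lborel) = (\<integral>\<^sup>+ t. enn_powr (v t) q \<partial>lborel)"
      by (intro nn_integral_cong_AE) auto
    then show ?thesis using 2 by (simp add: Nq_def)
  next
    case 3
    then have "AE t in lborel. v t = 0" using q0 by (intro Nq_eq_0_AE) auto
    then have "(\<integral>\<^sup>+ t. enn_powr (u t + v t) q \<partial>lborel) = (\<integral>\<^sup>+ t. enn_powr (u t) q \<partial>lborel)"
      by (intro nn_integral_cong_AE) auto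
    then show ?thesis using 3 by (simp add: Nq_def)
  next
    case 4
    have Iu: "(\<integral>\<^sup>+ t. enn_powr (u t) q \<partial>lborel) = ennreal (a powr q)"
      using 4 q0 enn_powr_inv2[of q "\<integral>\<^sup>+ t. enn_powr (u t) q \<partial>lborel"]
      by (simp add: Nq_def enn_powr_ennreal)
    have Iv: "(\<integral>\<^sup>+ t. enn_powr (v t) q \<partial>lborel) = ennreal (b powr q)"
      using 4 q0 enn_powr_inv2[of q "\<integral>\<^sup>+ t. enn_powr (v t) q \<partial>lborel"]
      by (simp add: Nq_def enn_powr_ennreal)
    have "(\<integral>\<^sup>+ t. enn_powr (u t + v t) q \<partial>lborel)
       \<le> (\<integral>\<^sup>+ t. ennreal ((a + b) powr (q - 1)) *
           (enn_powr (u t) q * ennreal (a powr (1 - q)) + enn_powr (v t) q * ennreal (b powr (1 - q))) \<partial>lborel)"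
      using 4 q by (intro nn_integral_mono R2) auto
    also have "\<dots> = ennreal ((a + b) powr (q - 1)) *
           ((\<integral>\<^sup>+ t. enn_powr (u t) q \<partial>lborel) * ennreal (a powr (1 - q)) +
            (\<integral>\<^sup>+ t. enn_powr (v t) q \<partial>lborel) * ennreal (b powr (1 - q)))"
      by (simp add: nn_integral_cmult nn_integral_add nn_integral_multc)
    also have "\<dots> = ennreal ((a + b) powr (q - 1) * (a powr q * a powr (1 - q) + b powr q * b powr (1 - q)))"
      using 4 by (simp add: Iu Iv ennreal_mult[symmetric] ennreal_plus[symmetric] del: ennreal_plus)
    also have "(a + b) powr (q - 1) * (a powr q * a powr (1 - q) + b powr q * b powr (1 - q)) = (a + b) powr q"
    proof -
      have "a powr q * a powr (1 - q) = a" "b powr q * b powr (1 - q) = b"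
        using 4 by (simp_all flip: powr_add)
      moreover have "(a + b) powr (q - 1) * (a + b) = (a + b) powr q"
        using 4 by (simp add: powr_diff)
      ultimately show ?thesis by simp
    qed
    finally have "(\<integral>\<^sup>+ t. enn_powr (u t + v t) q \<partial>lborel) \<le> ennreal ((a + b) powr q)" .
    then have "Nq q (\<lambda>t. u t + v t) \<le> enn_powr (ennreal ((a + b) powr q)) (1 / q)"
      unfolding Nq_def using q0 by (intro enn_powr_mono) auto
    also have "\<dots> = ennreal (a + b)"
      using 4 q0 by (simp add: enn_powr_ennreal powr_powr)
    finally show ?thesis using 4 by (simp add: ennreal_plus[symmetric] del: ennreal_plus)
  qed
qed

lemma mink_sum:
  fixes m :: nat
  assumes q: "q \<ge> 1" and [measurable]: "\<And>k. u k \<in> borel_measurable lborel"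
  shows "Nq q (\<lambda>t. \<Sum>k<m. u k t) \<le> (\<Sum>k<m. Nq q (u k))"
proof (induction m)
  case 0 then show ?case using q by simp
next
  case (Suc m)
  have "Nq q (\<lambda>t. \<Sum>k<Suc m. u k t) = Nq q (\<lambda>t. (\<Sum>k<m. u k t) + u m t)" by simp
  also have "\<dots> \<le> Nq q (\<lambda>t. \<Sum>k<m. u k t) + Nq q (u m)"
    using q by (intro mink2) auto
  also have "\<dots> \<le> (\<Sum>k<m. Nq q (u k)) + Nq q (u m)"
    using Suc by (intro add_right_mono)
  finally show ?case by simp
qed

lemma mink_suminf:
  assumes q: "q \<ge> 1" and [measurable]: "\<And>k. u k \<in> borel_measurable lborel"
  shows "Nq q (\<lambda>t. \<Sum>k. u k t) \<le> (\<Sum>k. Nq q (u k))"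
proof -
  have q0: "q > 0" using q by simp
  have inc: "incseq (\<lambda>m t. enn_powr (\<Sum>k<m. u k t) q)"
    using q0 by (intro incseq_SucI le_funI enn_powr_mono) auto
  have "Nq q (\<lambda>t. \<Sum>k. u k t) = enn_powr (\<integral>\<^sup>+ t. (SUP m. enn_powr (\<Sum>k<m. u k t) q) \<partial>lborel) (1 / q)"
    unfolding Nq_def suminf_eq_SUP using q0 by (simp add: enn_powr_SUP)
  also have "\<dots> = enn_powr (SUP m. \<integral>\<^sup>+ t. enn_powr (\<Sum>k<m. u k t) q \<partial>lborel) (1 / q)"
    using inc by (subst nn_integral_monotone_convergence_SUP) auto
  also have "\<dots> = (SUP m. Nq q (\<lambda>t. \<Sum>k<m. u k t))"
    using q0 by (simp add: enn_powr_SUP Nq_def)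
  also have "\<dots> \<le> (SUP m. \<Sum>k<m. Nq q (u k))"
  proof (rule SUP_mono)
    fix m :: nat
    show "\<exists>m'\<in>UNIV. Nq q (\<lambda>t. \<Sum>k<m. u k t) \<le> (\<Sum>k<m'. Nq q (u k))"
      using mink_sum[of q u m, OF q assms(2)] by blast
  qed
  also have "\<dots> = (\<Sum>k. Nq q (u k))"
    by (simp add: suminf_eq_SUP)
  finally show ?thesis .
qed


lemma measurable_line[measurable]:
  assumes [measurable]: "g \<in> borel_measurable (borel :: (real^'n) measure)"
  shows "(\<lambda>t. g (coord_upd x i t)) \<in> borel_measurable lborel"
proof -
  have "continuous_on UNIV (\<lambda>t. coord_upd (x::real^'n) i t)"
    unfolding coord_upd_def
  proof (intro continuous_on_vec_lambda)
    fix j show "continuous_on UNIV (\<lambda>t. if j = i then t else x $ j)"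
      by (cases "j = i") (auto intro!: continuous_intros)
  qed
  then have "(\<lambda>t. coord_upd (x::real^'n) i t) \<in> borel_measurable borel"
    by (rule borel_measurable_continuous_onI)
  then have "(\<lambda>t. coord_upd (x::real^'n) i t) \<in> measurable lborel borel"
    by simp
  from measurable_compose[OF this assms] show ?thesis .
qed

lemma fold_mono:
  assumes "\<And>j. q j > 0" "\<And>x. G x \<le> H x"
  shows "fold (mixed_step q) xs G x \<le> fold (mixed_step q) xs H x"
  using assms(2)
proof (induction xs arbitrary: G H x)
  case Nil then show ?case by simp
next
  case (Cons a xs)
  have "\<And>x. mixed_step q a G x \<le> mixed_step q a H x"
    unfolding mixed_step_Nq using assms(1) Cons.prems by (intro Nq_mono) auto
  then show ?case using Cons.IH by simp
qed

lemma fold_measurable[measurable]: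
  assumes "G \<in> borel_measurable (borel :: (real^'n) measure)"
  shows "fold (mixed_step q) xs G \<in> borel_measurable borel"
  using assms by (induction xs arbitrary: G) auto

lemma fold_suminf:
  fixes g :: "nat \<Rightarrow> real^'n \<Rightarrow> ennreal"
  assumes q: "\<And>j. q j \<ge> 1" and g: "\<And>k. g k \<in> borel_measurable borel"
  shows "fold (mixed_step q) xs (\<lambda>x. \<Sum>k. g k x) x \<le> (\<Sum>k. fold (mixed_step q) xs (g k) x)"
  using g
proof (induction xs arbitrary: g x)
  case Nil then show ?case by simp
next
  case (Cons a xs)
  note [measurable] = Cons.prems
  have q0: "\<And>j. q j > 0" using q by (metis less_le_trans zero_less_one)
  have "\<And>x. mixed_step q a (\<lambda>x. \<Sum>k. g k x) x \<le> (\<Sum>k. mixed_step q a (g k) x)"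
    unfolding mixed_step_Nq using q by (intro mink_suminf) auto
  then have "fold (mixed_step q) xs (mixed_step q a (\<lambda>x. \<Sum>k. g k x)) x
      \<le> fold (mixed_step q) xs (\<lambda>x. \<Sum>k. mixed_step q a (g k) x) x"
    by (intro fold_mono q0)
  also have "\<dots> \<le> (\<Sum>k. fold (mixed_step q) xs (mixed_step q a (g k)) x)"
    by (intro Cons.IH) auto
  finally show ?case by simp
qed

lemma step_cmult:
  assumes "q a > 0" and [measurable]: "G \<in> borel_measurable (borel :: (real^'n) measure)"
  shows "mixed_step q a (\<lambda>x. c * G x) = (\<lambda>x. c * mixed_step q a G x)"
  unfolding mixed_step_Nq using assms by (intro ext Nq_cmult) auto

lemma fold_cmult:
  assumes "\<And>j. q j > 0" and "G \<in> borel_measurable (borel :: (real^'n) measure)"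
  shows "fold (mixed_step q) xs (\<lambda>x. c * G x) x = c * fold (mixed_step q) xs G x"
  using assms(2)
proof (induction xs arbitrary: G x)
  case Nil then show ?case by simp
next
  case (Cons a xs)
  note [measurable] = Cons.prems
  have "mixed_step q a (\<lambda>x. c * G x) = (\<lambda>x. c * mixed_step q a G x)"
    using assms(1) by (intro step_cmult) auto
  then show ?case using Cons.IH[of "mixed_step q a G"] by simp
qed

lemma mixed_norm_fold:
  "mixed_norm q f = fold (mixed_step q) (sorted_list_of_set UNIV) (\<lambda>x. ennreal \<bar>f x\<bar>) 0"
  by (simp add: mixed_norm_def)


lemma young_pt:
  fixes x a L p q :: real
  assumes "p > 1" "q = p / (p - 1)" "x \<ge> 0" "a > 0" "L > 0"
  shows "x \<le> (a * L powr (1/p) * a powr (- q) / q) * x powr q + a * L powr (1/p) / (L * p)"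
proof -
  have iq: "1/q = (p - 1) / p" using assms by simp
  have q1: "q > 1" "1/q + 1/p = 1"
    using assms iq by (auto simp: diff_divide_distrib)
  have "(x / a) * L powr (-1/p) \<le> (x / a) powr q / q + (L powr (-1/p)) powr p / p"
    using Youngs_inequality[of q p "x / a" "L powr (-1/p)"] q1 assms by auto
  also have "(L powr (-1/p)) powr p = 1 / L"
  proof -
    have "(L powr (-1/p)) powr p = L powr (-1/p * p)" by (rule powr_powr)
    also have "-1/p * p = -1" using assms by simp
    finally show ?thesis using assms by (simp add: powr_minus divide_inverse)
  qed
  also have "(x / a) powr q = x powr q * a powr (- q)"
    using assms by (simp add: powr_divide powr_minus_divide)
  finally have *: "(x / a) * L powr (-1/p) \<le> x powr q * a powr (- q) / q + 1 / L / p" .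
  have pos: "a * L powr (1/p) > 0" using assms by simp
  have "x = (a * L powr (1/p)) * ((x / a) * L powr (-1/p))"
    using assms by (simp add: powr_minus_divide)
  also have "\<dots> \<le> (a * L powr (1/p)) * (x powr q * a powr (- q) / q + 1 / L / p)"
    using * pos by (intro mult_left_mono) auto
  also have "\<dots> = (a * L powr (1/p) * a powr (- q) / q) * x powr q + a * L powr (1/p) / (L * p)"
    by (simp add: field_simps)
  finally show ?thesis .
qed

lemma holder1:
  fixes u :: "real \<Rightarrow> ennreal"
  assumes p: "p > 1" and [measurable]: "u \<in> borel_measurable lborel" "S \<in> sets lborel"
    and SL: "emeasure lborel S \<le> ennreal L" and L: "L > 0"
    and supp: "\<And>t. t \<notin> S \<Longrightarrow> u t = 0"
  shows "integral\<^sup>N lborel u \<le> ennreal (L powr (1/p)) * Nq (conj_exp p) u"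
proof -
  define q where "q = conj_exp p"
  have qdef: "q = p / (p - 1)" by (simp add: q_def conj_exp_def)
  have q0: "q > 0" and q1: "q \<ge> 1" "1/q + 1/p = 1" using p by (auto simp: qdef field_simps)
  have Lp: "ennreal (L powr (1/p)) > 0" using L by simp
  consider "Nq q u = \<infinity>" | "Nq q u = 0" | a where "Nq q u = ennreal a" "a > 0"
    by (cases "Nq q u") (auto simp: le_less)
  then show ?thesis
  proof cases
    case 1 then show ?thesis using Lp by (simp add: q_def)
  next
    case 2
    then have "AE t in lborel. u t = 0" using q0 by (intro Nq_eq_0_AE) auto
    then have "integral\<^sup>N lborel u = 0" by (simp add: nn_integral_0_iff_AE)
    then show ?thesis by simp
  next
    case 3
    have Iu: "(\<integral>\<^sup>+ t. enn_powr (u t) q \<partial>lborel) = ennreal (a powr q)"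
      using 3 q0 enn_powr_inv2[of q "\<integral>\<^sup>+ t. enn_powr (u t) q \<partial>lborel"]
      by (simp add: Nq_def enn_powr_ennreal)
    define c1 where "c1 = a * L powr (1/p) * a powr (- q) / q"
    define c2 where "c2 = a * L powr (1/p) / (L * p)"
    have c12: "c1 \<ge> 0" "c2 \<ge> 0" using 3 L p q0 by (auto simp: c1_def c2_def)
    have pt: "u t \<le> ennreal c1 * enn_powr (u t) q + ennreal c2 * indicator S t" for t
    proof (cases "t \<in> S")
      case False then show ?thesis using supp by simp
    next
      case True
      show ?thesis
      proof (cases "u t")
        case (real r)
        then have "r \<le> c1 * r powr q + c2"
          unfolding c1_def c2_def using young_pt[OF p qdef _ _ L, of r a] 3 by simp
        then show ?thesis using real True c12
          by (simp add: enn_powr_ennreal ennreal_leI flip: ennreal_mult ennreal_plus)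
      next
        case top
        have "c1 > 0" using 3 L p q0 by (auto simp: c1_def)
        then show ?thesis using top by (simp add: ennreal_mult_eq_top_iff)
      qed
    qed
    have "integral\<^sup>N lborel u \<le> (\<integral>\<^sup>+ t. ennreal c1 * enn_powr (u t) q + ennreal c2 * indicator S t \<partial>lborel)"
      by (intro nn_integral_mono pt)
    also have "\<dots> = ennreal c1 * ennreal (a powr q) + ennreal c2 * emeasure lborel S"
      using assms(3) by (simp add: nn_integral_add nn_integral_cmult Iu nn_integral_indicator)
    also have "\<dots> \<le> ennreal c1 * ennreal (a powr q) + ennreal c2 * ennreal L"
      by (intro add_left_mono mult_left_mono SL) auto
    also have "\<dots> = ennreal (c1 * a powr q + c2 * L)"
      using c12 L by (simp add: ennreal_mult ennreal_plus)
    also have "c1 * a powr q + c2 * L = a * L powr (1/p)"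
    proof -
      have "c1 * a powr q = a * L powr (1/p) * (1/q)"
        using 3 by (simp add: c1_def powr_minus field_simps)
      moreover have "c2 * L = a * L powr (1/p) * (1/p)"
        using L p by (simp add: c2_def field_simps)
      ultimately have "c1 * a powr q + c2 * L = a * L powr (1/p) * (1/q + 1/p)"
        by (simp add: distrib_left)
      then show ?thesis using q1 by simp
    qed
    also have "ennreal (a * L powr (1/p)) = ennreal (L powr (1/p)) * Nq q u"
      using 3 by (simp add: ennreal_mult mult.commute)
    finally show ?thesis by (simp add: q_def)
  qed
qed

lemma conj_exp_gt1: "p > 1 \<Longrightarrow> conj_exp p > 1"
  by (simp add: conj_exp_def)

lemma holder_step:
  assumes p: "p i > 1" and [measurable]: "G \<in> borel_measurable (borel :: (real^'n) measure)"
    and "S \<in> sets lborel" "emeasure lborel S \<le> ennreal L" "L > 0"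
    and supp: "\<And>t. t \<notin> S \<Longrightarrow> G (coord_upd x i t) = 0"
  shows "mixed_step (\<lambda>_. 1) i G x \<le> ennreal (L powr (1 / p i)) * mixed_step (\<lambda>j. conj_exp (p j)) i G x"
  unfolding mixed_step_one mixed_step_Nq
  using assms by (intro holder1) auto

lemma holder_fold:
  fixes G :: "real^'n \<Rightarrow> ennreal"
  assumes p: "\<And>j. p j > 1" and "distinct xs" and G: "G \<in> borel_measurable borel"
    and S: "\<And>j. S j \<in> sets lborel" "\<And>j. emeasure lborel (S j) \<le> ennreal (L j)" "\<And>j. L j > 0"
    and supp: "\<And>x. (\<exists>j\<in>set xs. x $ j \<notin> S j) \<Longrightarrow> G x = 0"
  shows "fold (mixed_step (\<lambda>_. 1)) xs G x
    \<le> ennreal (\<Prod>j\<in>set xs. L j powr (1 / p j)) * fold (mixed_step (\<lambda>j. conj_exp (p j))) xs G x"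
  using assms(2,3) supp
proof (induction xs arbitrary: G x)
  case Nil then show ?case by simp
next
  case (Cons a xs)
  note [measurable] = Cons.prems(2)
  let ?Q = "\<lambda>j. conj_exp (p j)"
  have qpos: "\<And>j. ?Q j > 0" using p conj_exp_gt1 by (metis less_trans zero_less_one)
  have one_pos: "\<And>j::'n. (1::real) > 0" by simp
  define ca where "ca = L a powr (1 / p a)"
  have ca: "ca \<ge> 0" by (simp add: ca_def)
  have st: "mixed_step (\<lambda>_. 1) a G y \<le> ennreal ca * mixed_step ?Q a G y" for y
    unfolding ca_def
  proof (rule holder_step[OF p _ S(1) S(2) S(3)])
    fix t assume "t \<notin> S a"
    then show "G (coord_upd y a t) = 0"
      by (intro Cons.prems(3)) (auto simp: coord_upd_def)
  qed auto
  have "fold (mixed_step (\<lambda>_. 1)) (a # xs) G x = fold (mixed_step (\<lambda>_. 1)) xs (mixed_step (\<lambda>_. 1) a G) x"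
    by simp
  also have "\<dots> \<le> fold (mixed_step (\<lambda>_. 1)) xs (\<lambda>y. ennreal ca * mixed_step ?Q a G y) x"
    by (intro fold_mono st) simp
  also have "\<dots> = ennreal ca * fold (mixed_step (\<lambda>_. 1)) xs (mixed_step ?Q a G) x"
    by (intro fold_cmult) auto
  also have "\<dots> \<le> ennreal ca * (ennreal (\<Prod>j\<in>set xs. L j powr (1 / p j)) * fold (mixed_step ?Q) xs (mixed_step ?Q a G) x)"
  proof (intro mult_left_mono Cons.IH)
    show "distinct xs" using Cons.prems by simp
    show "mixed_step ?Q a G \<in> borel_measurable borel" by auto
    fix y assume "\<exists>j\<in>set xs. y $ j \<notin> S j"
    then obtain j where j: "j \<in> set xs" "y $ j \<notin> S j" by blast
    have "j \<noteq> a" using j Cons.prems(1) by auto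
    then have "\<And>t. G (coord_upd y a t) = 0"
      using j by (intro Cons.prems(3)) (auto simp: coord_upd_def intro!: bexI[of _ j])
    then show "mixed_step ?Q a G y = 0"
      unfolding mixed_step_Nq using qpos by simp
  qed auto
  also have "\<dots> = ennreal (\<Prod>j\<in>set (a # xs). L j powr (1 / p j)) * fold (mixed_step ?Q) (a # xs) G x"
  proof -
    have pn: "(\<Prod>j\<in>set xs. L j powr (1 / p j)) \<ge> 0" by (intro prod_nonneg) auto
    show ?thesis
      using Cons.prems(1) ca pn unfolding ca_def by (simp add: ennreal_mult mult.assoc)
  qed
  finally show ?case .
qed


lemma open_cube_box: "open_cube c r = box (c - (\<chi> i. r / 2)) (c + (\<chi> i. r / 2))"
proof -
  have *: "\<And>a b::real. \<bar>a - b\<bar> < r / 2 \<longleftrightarrow> b - r / 2 < a \<and> a < b + r / 2" by arith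
  show ?thesis unfolding open_cube_def set_eq_iff mem_box_cart vector_add_component vector_minus_component vec_lambda_beta
    by (simp only: * mem_Collect_eq) auto
qed

lemma measure_open_cube:
  fixes c :: "real^'n"
  assumes "r \<ge> 0"
  shows "measure lborel (open_cube c r) = r ^ CARD('n)"
proof -
  have "\<And>b. b \<in> (Basis :: (real^'n) set) \<Longrightarrow> ((c + (\<chi> i. r / 2)) - (c - (\<chi> i. r / 2))) \<bullet> b = r"
  proof -
    fix b :: "real^'n" assume "b \<in> Basis"
    then obtain i where b: "b = axis i 1" by (auto simp: Basis_vec_def)
    show "((c + (\<chi> i. r / 2)) - (c - (\<chi> i. r / 2))) \<bullet> b = r"
      unfolding b by (simp flip: cart_eq_inner_axis)
  qed
  moreover have "\<And>b. b \<in> (Basis :: (real^'n) set) \<Longrightarrow> (c - (\<chi> i. r / 2)) \<bullet> b \<le> (c + (\<chi> i. r / 2)) \<bullet> b"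
  proof -
    fix b :: "real^'n" assume "b \<in> Basis"
    then obtain i where b: "b = axis i 1" by (auto simp: Basis_vec_def)
    show "(c - (\<chi> i. r / 2)) \<bullet> b \<le> (c + (\<chi> i. r / 2)) \<bullet> b"
      unfolding b using assms by (simp flip: cart_eq_inner_axis)
  qed
  ultimately show ?thesis
    unfolding open_cube_box measure_lborel_box_eq by simp
qed

lemma open_cube_measurable[measurable]: "open_cube c r \<in> sets lborel"
  unfolding open_cube_box by simp

lemma dyadic_cover:
  fixes c :: "real^'n"
  assumes r: "r > 0"
  shows "\<exists>k m. 2 powr (- k) \<le> r \<and> open_cube c r \<subseteq> open_cube (dyadic_center k m) (3 * 2 powr (- k))"
proof -
  define k :: int where "k = - \<lfloor>log 2 r\<rfloor>"
  define l where "l = (2::real) powr (- k)"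
  have l: "l = 2 powr \<lfloor>log 2 r\<rfloor>" by (simp add: l_def k_def)
  have lpos: "l > 0" by (simp add: l_def)
  have "l \<le> 2 powr (log 2 r)" unfolding l by (intro powr_mono) auto
  then have lr: "l \<le> r" using r by simp
  have "r = 2 powr (log 2 r)" using r by simp
  also have "\<dots> < 2 powr (\<lfloor>log 2 r\<rfloor> + 1)" by (intro powr_less_mono) linarith+
  also have "\<dots> = 2 * l" unfolding l by (simp add: powr_add)
  finally have r2l: "r < 2 * l" .
  define m :: "int^'n" where "m = (\<chi> j. \<lfloor>c $ j / l\<rfloor>)"
  have cm: "l * of_int (m $ j) \<le> c $ j" "c $ j < l * (of_int (m $ j) + 1)" for j
  proof -
    have "of_int \<lfloor>c $ j / l\<rfloor> \<le> c $ j / l" "c $ j / l < of_int \<lfloor>c $ j / l\<rfloor> + 1"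
      by linarith+
    note h = this
    have "of_int \<lfloor>c $ j / l\<rfloor> * l \<le> c $ j / l * l"
      using h(1) lpos by (intro mult_right_mono) auto
    moreover have "c $ j / l * l < (of_int \<lfloor>c $ j / l\<rfloor> + 1) * l"
      using h(2) lpos by (intro mult_strict_right_mono) auto
    ultimately have "of_int \<lfloor>c $ j / l\<rfloor> * l \<le> c $ j" "c $ j < (of_int \<lfloor>c $ j / l\<rfloor> + 1) * l"
      using lpos by auto
    then show "l * of_int (m $ j) \<le> c $ j" "c $ j < l * (of_int (m $ j) + 1)"
      using lpos by (auto simp: m_def mult.commute)
  qed
  have "open_cube c r \<subseteq> open_cube (dyadic_center k m) (3 * l)"
  proof
    fix y assume "y \<in> open_cube c r"
    then have y: "\<bar>y $ j - c $ j\<bar> < r / 2" for j by (auto simp: open_cube_def)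
    show "y \<in> open_cube (dyadic_center k m) (3 * l)"
    proof -
      have "\<bar>y $ j - l * (of_int (m $ j) + 1 / 2)\<bar> < 3 * l / 2" for j
      proof -
        have e: "l * (of_int (m $ j) + 1 / 2) = l * of_int (m $ j) + l / 2"
          by (simp add: algebra_simps)
        have "l * (of_int (m $ j) + 1) = l * of_int (m $ j) + l"
          by (simp add: algebra_simps)
        then show ?thesis unfolding e using y[of j] cm[of j] r2l by arith
      qed
      then show ?thesis
        by (auto simp: open_cube_def dyadic_center_def l_def)
    qed
  qed
  then show ?thesis using lr unfolding l_def by (intro exI[of _ k] exI[of _ m]) simp
qed

lemma dyadic_inj:
  fixes m m' :: "int^'n"
  assumes eq: "dyadic_cube k m = dyadic_cube k' m'"
  shows "k = k' \<and> m = m'"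
proof -
  define l where "l = (2::real) powr (- k)"
  define l' where "l' = (2::real) powr (- k')"
  have lpos: "l > 0" "l' > 0" by (auto simp: l_def l'_def)
  define z :: "real^'n" where "z = (\<chi> i. l * of_int (m $ i))"
  have zin: "z \<in> dyadic_cube k m"
    using lpos by (auto simp: z_def dyadic_cube_def l_def)
  then have zin': "z \<in> dyadic_cube k' m'" using eq by simp
  have int_eq: "{l * of_int (m $ j) ..< l * (of_int (m $ j) + 1)} = {l' * of_int (m' $ j) ..< l' * (of_int (m' $ j) + 1)}" for j
  proof -
    have "t \<in> {l * of_int (m $ j) ..< l * (of_int (m $ j) + 1)} \<longleftrightarrow> (\<chi> i. if i = j then t else z $ i) \<in> dyadic_cube k m" for t
      using zin by (auto simp: dyadic_cube_def l_def)
    moreover have "t \<in> {l' * of_int (m' $ j) ..< l' * (of_int (m' $ j) + 1)} \<longleftrightarrow> (\<chi> i. if i = j then t else z $ i) \<in> dyadic_cube k' m'" for t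
      using zin' by (auto simp: dyadic_cube_def l'_def)
    ultimately show ?thesis using eq by blast
  qed
  have ends: "l * of_int (m $ j) = l' * of_int (m' $ j)" "l * (of_int (m $ j) + 1) = l' * (of_int (m' $ j) + 1)" for j
  proof -
    have "l * of_int (m $ j) < l * (of_int (m $ j) + 1)" "l' * of_int (m' $ j) < l' * (of_int (m' $ j) + 1)"
      using lpos by auto
    from atLeastLessThan_inj[OF int_eq[of j] this]
    show "l * of_int (m $ j) = l' * of_int (m' $ j)" "l * (of_int (m $ j) + 1) = l' * (of_int (m' $ j) + 1)" .
  qed
  have "l = l'" using ends[of undefined] by (simp add: algebra_simps)
  then have kk: "k = k'" by (simp add: l_def l'_def powr_inj)
  have "m $ j = m' $ j" for j using ends(1)[of j] lpos \<open>l = l'\<close> by simp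
  then show ?thesis using kk by (simp add: vec_eq_iff)
qed


lemma exp_bounds:
  fixes p :: "'n::{finite,linorder} \<Rightarrow> real"
  assumes p0: "1 < p0" and p: "\<forall>i. 1 < p i"
    and cond: "real CARD('n) / p0 < (\<Sum>i\<in>UNIV. 1 / p i)"
  shows "block_exp p0 p < 0" "block_exp p0 p > -1"
proof -
  define S where "S = (\<Sum>i\<in>UNIV. 1 / p i)"
  have n: "real CARD('n) > 0" by simp
  have "1 / p0 < S / real CARD('n)" using cond n by (simp add: S_def field_simps)
  then show "block_exp p0 p < 0" by (simp add: block_exp_def S_def)
  have "S < (\<Sum>i\<in>(UNIV::'n set). 1)"
    unfolding S_def using p by (intro sum_strict_mono) (auto simp: divide_less_eq_1)
  then have "S / real CARD('n) < 1" using n by simp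
  moreover have "1 / p0 > 0" using p0 by simp
  moreover have "block_exp p0 p = 1 / p0 - S / real CARD('n)" by (simp add: block_exp_def S_def)
  ultimately show "block_exp p0 p > -1" by linarith
qed

lemma scale_ineq:
  fixes e r l :: real and n :: nat
  assumes "e \<le> 0" "e \<ge> -1" "0 < l" "l \<le> r"
  shows "(r ^ n) powr e \<le> 3 ^ n * ((3 * l) ^ n) powr e"
proof -
  have "(r ^ n) powr e \<le> (l ^ n) powr e"
    using assms by (intro powr_mono2') (auto intro: power_mono)
  also have "\<dots> \<le> ((3::real) ^ n) powr (1 + e) * (l ^ n) powr e"
  proof -
    have "1 \<le> ((3::real) ^ n) powr (1 + e)"
      using assms by (intro ge_one_powr_ge_zero) auto
    then have "1 * (l ^ n) powr e \<le> ((3::real) ^ n) powr (1 + e) * (l ^ n) powr e"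
      by (intro mult_right_mono) auto
    then show ?thesis by simp
  qed
  also have "\<dots> = 3 ^ n * ((3 * l) ^ n) powr e"
    using assms by (simp add: powr_add power_mult_distrib powr_mult)
  finally show ?thesis .
qed

lemma real_bound:
  fixes r R S a :: real
  assumes "r > 0" "R > 0" "S > 0" "a > 0" "a - S < 0"
  shows "min r (2 * R) powr S * r powr (a - S) \<le> (2 * R) powr a"
proof (cases "r \<le> 2 * R")
  case True
  then have "min r (2 * R) powr S * r powr (a - S) = r powr a"
    using assms by (simp add: powr_add[symmetric])
  also have "\<dots> \<le> (2 * R) powr a" using True assms by (intro powr_mono2) auto
  finally show ?thesis .
next
  case False
  then have "min r (2 * R) powr S * r powr (a - S) = (2 * R) powr S * r powr (a - S)" by simp
  also have "\<dots> \<le> (2 * R) powr S * (2 * R) powr (a - S)"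
    using False assms by (intro mult_left_mono powr_mono2') auto
  also have "\<dots> = (2 * R) powr a" using assms by (simp add: powr_add[symmetric])
  finally show ?thesis .
qed

lemma local_bound:
  fixes b :: "real^'n::{finite,linorder} \<Rightarrow> real" and p :: "'n \<Rightarrow> real"
  assumes p0: "1 < p0" and p: "\<forall>i. 1 < p i"
    and cond: "real CARD('n) / p0 < (\<Sum>i\<in>UNIV. 1 / p i)"
    and r: "r > 0" and R: "R > 0" and blk: "block_on p0 p (open_cube c r) b"
  shows "(\<integral>\<^sup>+ x. indicator (open_cube 0 (2 * R)) x * ennreal \<bar>b x\<bar> \<partial>lborel)
           \<le> ennreal ((2 * R) powr (real CARD('n) / p0))"
proof -
  have bm[measurable]: "b \<in> borel_measurable borel" and bsupp: "{x. b x \<noteq> 0} \<subseteq> open_cube c r"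
    and bn: "mixed_norm (\<lambda>i. conj_exp (p i)) b \<le> ennreal (measure lborel (open_cube c r) powr block_exp p0 p)"
    using blk by (auto simp: block_on_def)
  define g where "g x = indicator (open_cube 0 (2 * R)) x * ennreal \<bar>b x\<bar>" for x
  have gm[measurable]: "g \<in> borel_measurable borel"
  proof -
    have "open_cube 0 (2 * R) \<in> sets (borel :: (real^'n::{finite,linorder}) measure)"
      using open_cube_measurable by simp
    then show ?thesis unfolding g_def by measurable
  qed
  let ?xs = "sorted_list_of_set (UNIV :: 'n::{finite,linorder} set)"
  define mu where "mu = min r (2 * R)"
  have mu: "mu > 0" using r R by (simp add: mu_def)
  define S where "S j = {c $ j - r / 2 <..< c $ j + r / 2} \<inter> {- R <..< R}" for j
  have Sm: "S j \<in> sets lborel" for j by (simp add: S_def)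
  have SL: "emeasure lborel (S j) \<le> ennreal mu" for j
  proof -
    have "emeasure lborel (S j) \<le> emeasure lborel {c $ j - r / 2 <..< c $ j + r / 2}"
      by (intro emeasure_mono) (auto simp: S_def)
    also have "\<dots> = ennreal r" using r by simp
    finally have 1: "emeasure lborel (S j) \<le> ennreal r" .
    have "emeasure lborel (S j) \<le> emeasure lborel {- R <..< R}"
      by (intro emeasure_mono) (auto simp: S_def)
    also have "\<dots> = ennreal (2 * R)" using R by simp
    finally have 2: "emeasure lborel (S j) \<le> ennreal (2 * R)" .
    show ?thesis using 1 2 by (cases "r \<le> 2 * R") (auto simp: mu_def min_def)
  qed
  have supp: "g x = 0" if "\<exists>j\<in>set ?xs. x $ j \<notin> S j" for x
  proof -
    from that obtain j where j: "x $ j \<notin> S j" by blast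
    show ?thesis
    proof (cases "\<bar>x $ j - c $ j\<bar> < r / 2")
      case True
      then have "\<not> \<bar>x $ j\<bar> < R" using j unfolding S_def by (auto simp: abs_if split: if_splits)
      then have "x \<notin> open_cube 0 (2 * R)" by (auto simp: open_cube_def)
      then show ?thesis by (simp add: g_def)
    next
      case False
      then have "x \<notin> open_cube c r" by (auto simp: open_cube_def)
      then have "b x = 0" using bsupp by auto
      then show ?thesis by (simp add: g_def)
    qed
  qed
  have "(\<integral>\<^sup>+ x. g x \<partial>lborel) = fold (mixed_step (\<lambda>_. 1)) ?xs g 0"
    by (rule tonelli_fold) simp
  also have "\<dots> \<le> ennreal (\<Prod>j\<in>set ?xs. mu powr (1 / p j)) * fold (mixed_step (\<lambda>j. conj_exp (p j))) ?xs g 0"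
    using p by (intro holder_fold[where S=S and L="\<lambda>_. mu"] Sm SL mu supp gm) auto
  also have "\<dots> \<le> ennreal (\<Prod>j\<in>set ?xs. mu powr (1 / p j)) * mixed_norm (\<lambda>i. conj_exp (p i)) b"
  proof (intro mult_left_mono)
    have "\<And>j. conj_exp (p j) > 0" using p conj_exp_gt1 by (metis less_trans zero_less_one)
    then show "fold (mixed_step (\<lambda>j. conj_exp (p j))) ?xs g 0 \<le> mixed_norm (\<lambda>i. conj_exp (p i)) b"
      unfolding mixed_norm_fold by (intro fold_mono) (auto simp: g_def indicator_def)
  qed simp
  also have "\<dots> \<le> ennreal (\<Prod>j\<in>set ?xs. mu powr (1 / p j)) * ennreal ((r ^ CARD('n)) powr block_exp p0 p)"
    using bn r by (intro mult_left_mono) (auto simp: measure_open_cube)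
  also have "\<dots> = ennreal ((\<Prod>j\<in>UNIV. mu powr (1 / p j)) * (r ^ CARD('n)) powr block_exp p0 p)"
    by (simp add: ennreal_mult prod_nonneg)
  also have "(\<Prod>j\<in>UNIV. mu powr (1 / p j)) * (r ^ CARD('n)) powr block_exp p0 p
      = mu powr (\<Sum>i\<in>UNIV. 1 / p i) * r powr (real CARD('n) / p0 - (\<Sum>i\<in>UNIV. 1 / p i))"
  proof -
    have "(\<Prod>j\<in>UNIV. mu powr (1 / p j)) = mu powr (\<Sum>i\<in>UNIV. 1 / p i)"
      using mu by (simp add: powr_sum)
    moreover have "(r ^ CARD('n)) powr block_exp p0 p = r powr (real CARD('n) * block_exp p0 p)"
      using r by (simp add: powr_realpow[symmetric] powr_powr)
    moreover have "real CARD('n) * block_exp p0 p = real CARD('n) / p0 - (\<Sum>i\<in>UNIV. 1 / p i)"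
      by (simp add: block_exp_def field_simps)
    ultimately show ?thesis by simp
  qed
  also have "\<dots> \<le> (2 * R) powr (real CARD('n) / p0)"
  proof (rule real_bound[OF r R, unfolded mu_def[symmetric]])
    show "0 < (\<Sum>i\<in>UNIV. 1 / p i)" using p by (intro sum_pos) (auto intro: less_trans[OF zero_less_one])
    show "0 < real CARD('n) / p0" using p0 by simp
    show "real CARD('n) / p0 - (\<Sum>i\<in>UNIV. 1 / p i) < 0" using cond by simp
  qed
  finally show ?thesis
    unfolding g_def by (simp add: ennreal_leI)
qed


lemma restr_summable:
  fixes g :: "nat \<Rightarrow> real"
  assumes "summable (\<lambda>i. \<bar>g i\<bar>)"
  shows "summable (\<lambda>i. \<bar>if P i then g i else 0\<bar>)" "summable (\<lambda>i. if P i then g i else 0)"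
proof -
  show "summable (\<lambda>i. \<bar>if P i then g i else 0\<bar>)"
    by (rule summable_comparison_test'[OF assms, of 0]) auto
  then show "summable (\<lambda>i. if P i then g i else 0)"
    by (rule summable_rabs_cancel)
qed

lemma restr_has_sum:
  fixes g :: "nat \<Rightarrow> real"
  assumes "summable (\<lambda>i. \<bar>g i\<bar>)"
  shows "(g has_sum (\<Sum>i. if P i then g i else 0)) {i. P i}"
proof -
  have "((\<lambda>i. if P i then g i else 0) has_sum (\<Sum>i. if P i then g i else 0)) UNIV"
    using restr_summable[OF assms, of P]
    by (intro norm_summable_imp_has_sum) (auto intro: summable_sums)
  then show ?thesis
    by (rule has_sum_cong_neutral[THEN iffD1, rotated -1]) auto
qed

lemma group_has_sum:
  fixes g :: "nat \<Rightarrow> real" and s :: "nat \<Rightarrow> 'k"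
  assumes "summable (\<lambda>i. \<bar>g i\<bar>)" and "g sums S"
  shows "((\<lambda>k. \<Sum>i. if s i = k then g i else 0) has_sum S) UNIV"
proof -
  have g: "(g has_sum S) UNIV"
    using assms by (intro norm_summable_imp_has_sum) auto
  have bij: "bij_betw (\<lambda>i. (s i, i)) UNIV (Sigma UNIV (\<lambda>k. {i. s i = k}))"
    by (auto simp: bij_betw_def inj_on_def image_def)
  have "((\<lambda>z. g (snd z)) has_sum S) (Sigma UNIV (\<lambda>k. {i. s i = k}))"
    using has_sum_reindex_bij_betw[OF bij, of "\<lambda>z. g (snd z)" S] g by simp
  then show ?thesis
  proof (rule has_sum_Sigma')
    fix k
    show "((\<lambda>i. g (snd (k, i))) has_sum (\<Sum>i. if s i = k then g i else 0)) {i. s i = k}"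
      using restr_has_sum[OF assms(1), of "\<lambda>i. s i = k"] by simp
  qed
qed

locale dec =
  fixes p0 :: real and p :: "'n::{finite,linorder} \<Rightarrow> real" and f :: "real^('n::{finite,linorder}) \<Rightarrow> real"
    and lam :: "nat \<Rightarrow> real" and b :: "nat \<Rightarrow> real^('n::{finite,linorder}) \<Rightarrow> real"
  assumes p0: "1 < p0" and p: "\<forall>i. 1 < p i"
    and cond: "real CARD('n) / p0 < (\<Sum>i\<in>UNIV. 1 / p i)"
    and dec: "block_decomp p0 p f lam b"
begin

lemma sl: "summable (\<lambda>i. \<bar>lam i\<bar>)" using dec by (simp add: block_decomp_def)
lemma conv: "AE x in lborel. (\<lambda>N. \<Sum>i<N. lam i * b i x) \<longlonglongrightarrow> f x"
  using dec by (simp add: block_decomp_def)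

definition cr :: "nat \<Rightarrow> (real^('n::{finite,linorder})) \<times> real" where
  "cr i = (SOME cr. snd cr > 0 \<and> block_on p0 p (open_cube (fst cr) (snd cr)) (b i))"

lemma cr: "snd (cr i) > 0" "block_on p0 p (open_cube (fst (cr i)) (snd (cr i))) (b i)"
proof -
  have "is_block p0 p (b i)" using dec by (simp add: block_decomp_def)
  then obtain c r where "r > 0" "block_on p0 p (open_cube c r) (b i)" by (auto simp: is_block_def)
  then have "\<exists>cr. snd cr > 0 \<and> block_on p0 p (open_cube (fst cr) (snd cr)) (b i)"
    by (intro exI[of _ "(c, r)"]) simp
  from someI_ex[OF this] show "snd (cr i) > 0" "block_on p0 p (open_cube (fst (cr i)) (snd (cr i))) (b i)"
    by (simp_all add: cr_def)
qed

lemma b_meas[measurable]: "b i \<in> borel_measurable borel"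
  using cr(2)[of i] by (simp add: block_on_def)

definition G :: "real^('n::{finite,linorder}) \<Rightarrow> ennreal" where
  "G x = (\<Sum>i. ennreal \<bar>lam i\<bar> * ennreal \<bar>b i x\<bar>)"

lemma G_meas[measurable]: "G \<in> borel_measurable borel"
  unfolding G_def by measurable

lemma int_bound:
  assumes R: "R > 0"
  shows "(\<integral>\<^sup>+ x. indicator (open_cube 0 (2 * R)) x * G x \<partial>lborel)
     \<le> ennreal ((2 * R) powr (real CARD('n) / p0)) * ennreal (\<Sum>i. \<bar>lam i\<bar>)"
proof -
  let ?K = "open_cube (0::real^('n::{finite,linorder})) (2 * R)"
  have Km[measurable]: "?K \<in> sets borel" using open_cube_measurable by simp
  let ?C = "ennreal ((2 * R) powr (real CARD('n) / p0))"
  have "(\<integral>\<^sup>+ x. indicator ?K x * G x \<partial>lborel)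
      = (\<integral>\<^sup>+ x. (\<Sum>i. ennreal \<bar>lam i\<bar> * (indicator ?K x * ennreal \<bar>b i x\<bar>)) \<partial>lborel)"
    unfolding G_def by (subst ennreal_suminf_cmult[symmetric]) (simp add: ac_simps)
  also have "\<dots> = (\<Sum>i. \<integral>\<^sup>+ x. ennreal \<bar>lam i\<bar> * (indicator ?K x * ennreal \<bar>b i x\<bar>) \<partial>lborel)"
    by (rule nn_integral_suminf) measurable
  also have "\<dots> = (\<Sum>i. ennreal \<bar>lam i\<bar> * \<integral>\<^sup>+ x. indicator ?K x * ennreal \<bar>b i x\<bar> \<partial>lborel)"
    by (intro suminf_cong nn_integral_cmult) measurable
  also have "\<dots> \<le> (\<Sum>i. ennreal \<bar>lam i\<bar> * ?C)"
    using local_bound[OF p0 p cond cr(1) R cr(2)]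
    by (intro suminf_le mult_left_mono) auto
  also have "\<dots> = ?C * ennreal (\<Sum>i. \<bar>lam i\<bar>)"
    using sl by (simp add: suminf_ennreal2 mult.commute)
  finally show ?thesis by (simp add: mult.commute)
qed

lemma in_some_cube: "\<exists>R::nat. x \<in> open_cube (0::real^('n::{finite,linorder})) (2 * (real R + 1))"
proof -
  define R where "R = nat \<lceil>\<Sum>j\<in>UNIV. \<bar>x $ j\<bar>\<rceil>"
  have hR: "\<bar>x $ j\<bar> < real R + 1" for j
  proof -
    have "\<bar>x $ j\<bar> \<le> (\<Sum>j\<in>UNIV. \<bar>x $ j\<bar>)"
      by (rule member_le_sum) auto
    also have "\<dots> \<le> real R" unfolding R_def by linarith
    finally show ?thesis by simp
  qed
  have "\<bar>x $ j\<bar> * 2 < 2 * real R + 2" for j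
    using hR[of j] by linarith
  then show ?thesis by (intro exI[of _ R]) (simp add: open_cube_def)
qed

lemma AE_G: "AE x in lborel. G x \<noteq> \<infinity>"
proof -
  have "AE x in lborel. indicator (open_cube (0::real^('n::{finite,linorder})) (2 * (real R + 1))) x * G x \<noteq> \<infinity>" for R :: nat
  proof (rule nn_integral_PInf_AE)
    have Km[measurable]: "open_cube (0::real^('n::{finite,linorder})) (2 * (real R + 1)) \<in> sets borel"
      using open_cube_measurable by simp
    show "(\<lambda>x. indicator (open_cube (0::real^('n::{finite,linorder})) (2 * (real R + 1))) x * G x) \<in> borel_measurable lborel"
      by measurable
    have "(\<integral>\<^sup>+ x. indicator (open_cube 0 (2 * (real R + 1))) x * G x \<partial>lborel)
      \<le> ennreal ((2 * (real R + 1)) powr (real CARD('n) / p0)) * ennreal (\<Sum>i. \<bar>lam i\<bar>)"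
      by (rule int_bound) simp
    also have "\<dots> < \<infinity>" by (simp add: ennreal_mult_less_top)
    finally show "(\<integral>\<^sup>+ x. indicator (open_cube 0 (2 * (real R + 1))) x * G x \<partial>lborel) \<noteq> \<infinity>"
      by simp
  qed
  then have "AE x in lborel. \<forall>R::nat. indicator (open_cube (0::real^('n::{finite,linorder})) (2 * (real R + 1))) x * G x \<noteq> \<infinity>"
    by (simp add: AE_all_countable)
  then show ?thesis
  proof (rule eventually_mono)
    fix x assume "\<forall>R::nat. indicator (open_cube (0::real^('n::{finite,linorder})) (2 * (real R + 1))) x * G x \<noteq> \<infinity>"
    moreover obtain R :: nat where "x \<in> open_cube (0::real^('n::{finite,linorder})) (2 * (real R + 1))"
      using in_some_cube by blast
    ultimately show "G x \<noteq> \<infinity>" by (metis indicator_simps(1) mult_1)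
  qed
qed


lemma G_eq: "G x = (\<Sum>i. ennreal \<bar>lam i * b i x\<bar>)"
  unfolding G_def by (simp add: abs_mult ennreal_mult)

lemma AE_good: "AE x in lborel. summable (\<lambda>i. \<bar>lam i * b i x\<bar>) \<and> (\<lambda>i. lam i * b i x) sums f x"
  using AE_G conv
proof eventually_elim
  case (elim x)
  then have "summable (\<lambda>i. \<bar>lam i * b i x\<bar>)"
    by (intro summable_suminf_not_top) (auto simp: G_eq)
  with elim show ?case by (simp add: sums_def)
qed

lemma AE_abs_f: "AE x in lborel. ennreal \<bar>f x\<bar> \<le> G x"
  using AE_good
proof eventually_elim
  case (elim x)
  then have "\<bar>f x\<bar> \<le> (\<Sum>i. \<bar>lam i * b i x\<bar>)"
    using summable_rabs[of "\<lambda>i. lam i * b i x"] by (simp add: sums_iff)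
  then have "ennreal \<bar>f x\<bar> \<le> ennreal (\<Sum>i. \<bar>lam i * b i x\<bar>)" by (rule ennreal_leI)
  also have "\<dots> = G x" using elim by (simp add: G_eq suminf_ennreal2)
  finally show ?case .
qed

lemma int_f_bound:
  assumes R: "R > 0"
  shows "(\<integral>\<^sup>+ x. indicator (open_cube 0 (2 * R)) x * ennreal \<bar>f x\<bar> \<partial>lborel)
     \<le> ennreal ((2 * R) powr (real CARD('n) / p0)) * ennreal (\<Sum>i. \<bar>lam i\<bar>)"
proof -
  have "(\<integral>\<^sup>+ x. indicator (open_cube 0 (2 * R)) x * ennreal \<bar>f x\<bar> \<partial>lborel)
     \<le> (\<integral>\<^sup>+ x. indicator (open_cube 0 (2 * R)) x * G x \<partial>lborel)"
    using AE_abs_f by (intro nn_integral_mono_AE) (auto elim!: eventually_mono intro: mult_left_mono)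
  also have "\<dots> \<le> ennreal ((2 * R) powr (real CARD('n) / p0)) * ennreal (\<Sum>i. \<bar>lam i\<bar>)"
    by (rule int_bound[OF R])
  finally show ?thesis .
qed

end


context dec begin

definition km :: "nat \<Rightarrow> int \<times> (int^('n::{finite,linorder}))" where
  "km i = (SOME km. 2 powr (- real_of_int (fst km)) \<le> snd (cr i) \<and>
      open_cube (fst (cr i)) (snd (cr i)) \<subseteq> open_cube (dyadic_center (fst km) (snd km)) (3 * 2 powr (- real_of_int (fst km))))"

lemma km: "2 powr (- real_of_int (fst (km i))) \<le> snd (cr i)"
  "open_cube (fst (cr i)) (snd (cr i)) \<subseteq> open_cube (dyadic_center (fst (km i)) (snd (km i))) (3 * 2 powr (- real_of_int (fst (km i))))"
proof -
  obtain k m where "2 powr (- real_of_int k) \<le> snd (cr i)"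
    "open_cube (fst (cr i)) (snd (cr i)) \<subseteq> open_cube (dyadic_center k m) (3 * 2 powr (- real_of_int k))"
    using dyadic_cover[OF cr(1)[of i], of "fst (cr i)"] by auto
  then have "\<exists>km. 2 powr (- real_of_int (fst km)) \<le> snd (cr i) \<and>
      open_cube (fst (cr i)) (snd (cr i)) \<subseteq> open_cube (dyadic_center (fst km) (snd km)) (3 * 2 powr (- real_of_int (fst km)))"
    by (intro exI[of _ "(k, m)"]) simp
  from someI_ex[OF this] show "2 powr (- real_of_int (fst (km i))) \<le> snd (cr i)"
    "open_cube (fst (cr i)) (snd (cr i)) \<subseteq> open_cube (dyadic_center (fst (km i)) (snd (km i))) (3 * 2 powr (- real_of_int (fst (km i))))"
    by (simp_all add: km_def)
qed

definition W :: "int \<times> (int^('n::{finite,linorder})) \<Rightarrow> real" where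
  "W \<kappa> = (\<Sum>i. if km i = \<kappa> then \<bar>lam i\<bar> else 0)"

definition LK :: "int \<times> (int^('n::{finite,linorder})) \<Rightarrow> real" where
  "LK \<kappa> = 3 ^ CARD('n) * W \<kappa>"

definition a :: "int \<times> (int^('n::{finite,linorder})) \<Rightarrow> nat \<Rightarrow> real" where
  "a \<kappa> i = (if km i = \<kappa> then lam i / LK \<kappa> else 0)"

definition BK :: "int \<times> (int^('n::{finite,linorder})) \<Rightarrow> real^('n::{finite,linorder}) \<Rightarrow> real" where
  "BK \<kappa> x = (if (\<Sum>i. ennreal \<bar>a \<kappa> i * b i x\<bar>) \<noteq> \<infinity> then (\<Sum>i. a \<kappa> i * b i x) else 0)"

lemma W_nonneg: "W \<kappa> \<ge> 0"
  unfolding W_def using restr_summable(2)[of "\<lambda>i. \<bar>lam i\<bar>" "\<lambda>i. km i = \<kappa>"] sl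
  by (intro suminf_nonneg) auto

lemma W_has_sum: "(W has_sum (\<Sum>i. \<bar>lam i\<bar>)) UNIV"
  unfolding W_def using sl by (intro group_has_sum) (auto intro: summable_sums)

lemma BK_meas[measurable]: "BK \<kappa> \<in> borel_measurable borel"
  unfolding BK_def by measurable

lemma BK_bound: "ennreal \<bar>BK \<kappa> x\<bar> \<le> (\<Sum>i. ennreal \<bar>a \<kappa> i\<bar> * ennreal \<bar>b i x\<bar>)"
proof (cases "(\<Sum>i. ennreal \<bar>a \<kappa> i * b i x\<bar>) \<noteq> \<infinity>")
  case True
  then have sm: "summable (\<lambda>i. \<bar>a \<kappa> i * b i x\<bar>)" by (intro summable_suminf_not_top) auto
  have "ennreal \<bar>BK \<kappa> x\<bar> \<le> ennreal (\<Sum>i. \<bar>a \<kappa> i * b i x\<bar>)"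
    using True summable_rabs[OF sm] by (intro ennreal_leI) (simp add: BK_def)
  also have "\<dots> = (\<Sum>i. ennreal \<bar>a \<kappa> i\<bar> * ennreal \<bar>b i x\<bar>)"
    using sm by (simp add: suminf_ennreal2[symmetric] abs_mult ennreal_mult)
  finally show ?thesis .
next
  case False then show ?thesis by (simp add: BK_def)
qed

lemma BK_supp: "BK \<kappa> x \<noteq> 0 \<Longrightarrow> \<exists>i. km i = \<kappa> \<and> b i x \<noteq> 0"
proof (rule ccontr)
  assume "BK \<kappa> x \<noteq> 0" "\<not> (\<exists>i. km i = \<kappa> \<and> b i x \<noteq> 0)"
  then have "(\<lambda>i. a \<kappa> i * b i x) = (\<lambda>i. 0)" by (auto simp: a_def)
  then have "BK \<kappa> x = 0" by (simp add: BK_def)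
  with \<open>BK \<kappa> x \<noteq> 0\<close> show False by simp
qed


lemma LK_nonneg: "LK \<kappa> \<ge> 0" using W_nonneg by (simp add: LK_def)

lemma abs_a: "\<bar>a \<kappa> i\<bar> = (if km i = \<kappa> then \<bar>lam i\<bar> else 0) / LK \<kappa>"
  using LK_nonneg[of \<kappa>] by (simp add: a_def)

lemma summable_abs_a: "summable (\<lambda>i. \<bar>a \<kappa> i\<bar>)"
  unfolding abs_a using restr_summable(2)[of "\<lambda>i. \<bar>lam i\<bar>" "\<lambda>i. km i = \<kappa>"] sl
  by (intro summable_divide) auto

lemma sum_abs_a: "(\<Sum>i. \<bar>a \<kappa> i\<bar>) = W \<kappa> / LK \<kappa>"
  unfolding abs_a W_def
  using restr_summable(2)[of "\<lambda>i. \<bar>lam i\<bar>" "\<lambda>i. km i = \<kappa>"] sl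
  by (subst suminf_divide) auto

lemma mn_b:
  fixes k :: int
  assumes "km i = (k, m)"
  shows "mixed_norm (\<lambda>i. conj_exp (p i)) (b i)
     \<le> ennreal (3 ^ CARD('n) * measure lborel (open_cube (dyadic_center k m) (3 * 2 powr (- k))) powr block_exp p0 p)"
proof -
  have e: "block_exp p0 p < 0" "block_exp p0 p > -1" using exp_bounds[OF p0 p cond] by auto
  have r: "snd (cr i) > 0" by (rule cr(1))
  have l: "2 powr (- real_of_int k) \<le> snd (cr i)" using km(1)[of i] assms by simp
  have "mixed_norm (\<lambda>i. conj_exp (p i)) (b i) \<le> ennreal (measure lborel (open_cube (fst (cr i)) (snd (cr i))) powr block_exp p0 p)"
    using cr(2)[of i] by (simp add: block_on_def)
  also have "\<dots> = ennreal ((snd (cr i) ^ CARD('n)) powr block_exp p0 p)"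
    using r by (simp add: measure_open_cube)
  also have "\<dots> \<le> ennreal (3 ^ CARD('n) * ((3 * 2 powr (- real_of_int k)) ^ CARD('n)) powr block_exp p0 p)"
    using e l by (intro ennreal_leI scale_ineq) auto
  also have "\<dots> = ennreal (3 ^ CARD('n) * measure lborel (open_cube (dyadic_center k m) (3 * 2 powr (- k))) powr block_exp p0 p)"
    by (simp add: measure_open_cube)
  finally show ?thesis .
qed

lemma BK_block:
  fixes k :: int
  shows "block_on p0 p (open_cube (dyadic_center k m) (3 * 2 powr (- k))) (BK (k, m))"
proof -
  let ?\<kappa> = "(k, m)"
  let ?q = "\<lambda>i. conj_exp (p i)"
  let ?xs = "sorted_list_of_set (UNIV :: 'n set)"
  let ?V = "measure lborel (open_cube (dyadic_center k m) (3 * 2 powr (- k))) powr block_exp p0 p"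
  have q1: "\<And>j. ?q j \<ge> 1" and q0: "\<And>j. ?q j > 0"
    using p conj_exp_gt1 by (auto intro: less_imp_le less_trans[OF zero_less_one])
  have supp: "{x. BK ?\<kappa> x \<noteq> 0} \<subseteq> open_cube (dyadic_center k m) (3 * 2 powr (- k))"
  proof
    fix x assume "x \<in> {x. BK ?\<kappa> x \<noteq> 0}"
    then have "BK ?\<kappa> x \<noteq> 0" by simp
    then obtain i where i: "km i = ?\<kappa>" "b i x \<noteq> 0" using BK_supp by blast
    have "x \<in> open_cube (fst (cr i)) (snd (cr i))"
      using cr(2)[of i] i(2) by (auto simp: block_on_def)
    then show "x \<in> open_cube (dyadic_center k m) (3 * 2 powr (- k))"
      using km(2)[of i] i(1) by auto
  qed
  have "mixed_norm ?q (BK ?\<kappa>) = fold (mixed_step ?q) ?xs (\<lambda>x. ennreal \<bar>BK ?\<kappa> x\<bar>) 0"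
    by (rule mixed_norm_fold)
  also have "\<dots> \<le> fold (mixed_step ?q) ?xs (\<lambda>x. \<Sum>i. ennreal \<bar>a ?\<kappa> i\<bar> * ennreal \<bar>b i x\<bar>) 0"
    by (intro fold_mono q0 BK_bound)
  also have "\<dots> \<le> (\<Sum>i. fold (mixed_step ?q) ?xs (\<lambda>x. ennreal \<bar>a ?\<kappa> i\<bar> * ennreal \<bar>b i x\<bar>) 0)"
    by (intro fold_suminf q1) measurable
  also have "\<dots> = (\<Sum>i. ennreal \<bar>a ?\<kappa> i\<bar> * mixed_norm ?q (b i))"
    unfolding mixed_norm_fold by (intro suminf_cong fold_cmult q0) measurable
  also have "\<dots> \<le> (\<Sum>i. ennreal \<bar>a ?\<kappa> i\<bar> * ennreal (3 ^ CARD('n) * ?V))"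
  proof (intro suminf_le)
    fix i
    show "ennreal \<bar>a ?\<kappa> i\<bar> * mixed_norm ?q (b i) \<le> ennreal \<bar>a ?\<kappa> i\<bar> * ennreal (3 ^ CARD('n) * ?V)"
    proof (cases "km i = ?\<kappa>")
      case True then show ?thesis by (intro mult_left_mono mn_b) auto
    next
      case False then show ?thesis by (simp add: a_def)
    qed
  qed auto
  also have "\<dots> = ennreal (3 ^ CARD('n) * ?V) * ennreal (\<Sum>i. \<bar>a ?\<kappa> i\<bar>)"
    using summable_abs_a by (simp add: suminf_ennreal2 mult.commute)
  also have "\<dots> \<le> ennreal ?V"
  proof (cases "W ?\<kappa> = 0")
    case True then show ?thesis by (simp add: sum_abs_a)
  next
    case False
    then have "(\<Sum>i. \<bar>a ?\<kappa> i\<bar>) = 1 / 3 ^ CARD('n)" by (simp add: sum_abs_a LK_def)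
    then show ?thesis by (simp flip: ennreal_mult)
  qed
  finally show ?thesis using supp by (simp add: block_on_def)
qed

lemma LK_BK:
  assumes sm: "summable (\<lambda>i. \<bar>lam i * b i x\<bar>)"
  shows "LK \<kappa> * BK \<kappa> x = (\<Sum>i. if km i = \<kappa> then lam i * b i x else 0)"
proof (cases "W \<kappa> = 0")
  case True
  have "summable (\<lambda>i. if km i = \<kappa> then \<bar>lam i\<bar> else 0)"
    using restr_summable(2)[of "\<lambda>i. \<bar>lam i\<bar>" "\<lambda>i. km i = \<kappa>"] sl by simp
  then have "\<forall>i. (if km i = \<kappa> then \<bar>lam i\<bar> else 0) = 0"
    using True unfolding W_def by (subst (asm) suminf_eq_zero_iff) auto
  then have "(\<lambda>i. if km i = \<kappa> then lam i * b i x else 0) = (\<lambda>i. 0)"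
    by (auto simp: fun_eq_iff split: if_splits)
  then show ?thesis using True by (simp add: LK_def)
next
  case False
  then have LK: "LK \<kappa> > 0" using W_nonneg[of \<kappa>] by (simp add: LK_def)
  have eq: "a \<kappa> i * b i x = (if km i = \<kappa> then lam i * b i x else 0) / LK \<kappa>" for i
    by (simp add: a_def)
  have sr: "summable (\<lambda>i. if km i = \<kappa> then lam i * b i x else 0)"
    "summable (\<lambda>i. \<bar>if km i = \<kappa> then lam i * b i x else 0\<bar>)"
    using restr_summable[OF sm] by auto
  have "summable (\<lambda>i. \<bar>a \<kappa> i * b i x\<bar>)"
    unfolding eq using sr(2) LK by (simp add: summable_divide)
  then have cnd: "(\<Sum>i. ennreal \<bar>a \<kappa> i * b i x\<bar>) \<noteq> top"
    by (intro ennreal_suminf_neq_top) auto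
  have "BK \<kappa> x = (\<Sum>i. (if km i = \<kappa> then lam i * b i x else 0) / LK \<kappa>)"
    using cnd by (simp add: BK_def eq)
  also have "\<dots> = (\<Sum>i. if km i = \<kappa> then lam i * b i x else 0) / LK \<kappa>"
    using sr(1) by (rule suminf_divide)
  finally show ?thesis using LK by simp
qed

lemma AE_has_sum: "AE x in lborel. ((\<lambda>\<kappa>. LK \<kappa> * BK \<kappa> x) has_sum f x) UNIV"
  using AE_good
proof eventually_elim
  case (elim x)
  then have "((\<lambda>\<kappa>. \<Sum>i. if km i = \<kappa> then lam i * b i x else 0) has_sum f x) UNIV"
    by (intro group_has_sum) auto
  then show ?case using elim by (simp add: LK_BK)
qed

lemma LK_has_sum: "(LK has_sum (3 ^ CARD('n) * (\<Sum>i. \<bar>lam i\<bar>))) UNIV"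
  unfolding LK_def[abs_def] by (intro has_sum_cmult_right W_has_sum)

end


lemma in_some_cube': "\<exists>R::nat. x \<in> open_cube (0::real^'n) (2 * (real R + 1))"
proof -
  define R where "R = nat \<lceil>\<Sum>j\<in>UNIV. \<bar>x $ j\<bar>\<rceil>"
  have hR: "\<bar>x $ j\<bar> < real R + 1" for j
  proof -
    have "\<bar>x $ j\<bar> \<le> (\<Sum>j\<in>UNIV. \<bar>x $ j\<bar>)"
      by (rule member_le_sum) auto
    also have "\<dots> \<le> real R" unfolding R_def by linarith
    finally show ?thesis by simp
  qed
  have "\<bar>x $ j\<bar> * 2 < 2 * real R + 2" for j
    using hR[of j] by linarith
  then show ?thesis by (intro exI[of _ R]) (simp add: open_cube_def)
qed

lemma zero_block:
  assumes p: "\<forall>i. 1 < p i"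
  shows "block_on p0 p Q (\<lambda>_::real^('n::{finite,linorder}). 0)"
proof -
  have q: "\<And>j. conj_exp (p j) > 0" using p conj_exp_gt1 by (metis less_trans zero_less_one)
  have "mixed_step (\<lambda>j. conj_exp (p j)) i (\<lambda>_::real^('n::{finite,linorder}). 0) = (\<lambda>_. 0)" for i
    using q by (simp add: mixed_step_Nq fun_eq_iff)
  then have "fold (mixed_step (\<lambda>j. conj_exp (p j))) xs (\<lambda>_::real^('n::{finite,linorder}). 0) = (\<lambda>_. 0)" for xs
    by (induction xs) auto
  then show ?thesis by (simp add: mixed_norm_def block_on_def)
qed

theorem lemma4p3:
  fixes p0 :: real and p :: "'n::{finite,linorder} \<Rightarrow> real" and f :: "real^('n::{finite,linorder}) \<Rightarrow> real"
  assumes "1 < p0" and "\<forall>i. 1 < p i"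
    and "real CARD('n) / p0 < (\<Sum>i\<in>UNIV. 1 / p i)"
    and "f \<in> block_space p0 p"
  shows "\<exists>(lam :: (real^('n::{finite,linorder})) set \<Rightarrow> real) (b :: (real^('n::{finite,linorder})) set \<Rightarrow> real^('n::{finite,linorder}) \<Rightarrow> real).
           (\<forall>Q\<in>dyadic_cubes. lam Q \<ge> 0) \<and>
           lam summable_on dyadic_cubes \<and>
           infsum lam dyadic_cubes \<le> 2 * 3 ^ CARD('n) * block_norm p0 p f \<and>
           (\<forall>k m. block_on p0 p (open_cube (dyadic_center k m) (3 * 2 powr (- k)))
                     (b (dyadic_cube k m))) \<and>
           (AE x in lborel. ((\<lambda>Q. lam Q * b Q x) has_sum f x) dyadic_cubes)"
proof -
  note p0 = assms(1) and p = assms(2) and cond = assms(3)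
  define D where "D = {(\<Sum>i. \<bar>lam i\<bar>) | lam b. block_decomp p0 p f lam b}"
  have bn: "block_norm p0 p f = Inf D" by (simp add: block_norm_def D_def)
  from assms(4) obtain lam0 b0 where fm: "f \<in> borel_measurable borel" and d0: "block_decomp p0 p f lam0 b0"
    by (auto simp: block_space_def)
  have Dne: "D \<noteq> {}" using d0 by (auto simp: D_def)
  have Dge: "d \<ge> 0" if "d \<in> D" for d
    using that by (auto simp: D_def block_decomp_def intro!: suminf_nonneg)
  have Dbdd: "bdd_below D" by (rule bdd_belowI[of _ 0]) (use Dge in auto)
  have bn0: "block_norm p0 p f \<ge> 0" unfolding bn using Dne Dge by (intro cInf_greatest) auto
  show ?thesis
  proof (cases "block_norm p0 p f = 0")
    case True
    have "AE x in lborel. f x = 0"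
    proof -
      have hR: "AE x in lborel. indicator (open_cube (0::real^('n::{finite,linorder})) (2 * (real R + 1))) x * ennreal \<bar>f x\<bar> = 0" for R :: nat
      proof -
        let ?K = "open_cube (0::real^('n::{finite,linorder})) (2 * (real R + 1))"
        have Km[measurable]: "?K \<in> sets borel" using open_cube_measurable by simp
        note fm[measurable]
        let ?C = "(2 * (real R + 1)) powr (real CARD('n) / p0)"
        have C: "?C > 0" by simp
        have "(\<integral>\<^sup>+ x. indicator ?K x * ennreal \<bar>f x\<bar> \<partial>lborel) \<le> 0"
        proof (rule ennreal_le_epsilon)
          fix e :: real assume e: "0 < e"
          have "Inf D < e / ?C" using True bn e C by simp
          then obtain d where d: "d \<in> D" "d < e / ?C" using cInf_lessD[OF Dne] by blast
          then obtain lam b where dec: "block_decomp p0 p f lam b" and dd: "d = (\<Sum>i. \<bar>lam i\<bar>)"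
            by (auto simp: D_def)
          interpret dec p0 p f lam b using p0 p cond dec by unfold_locales
          have "(\<integral>\<^sup>+ x. indicator ?K x * ennreal \<bar>f x\<bar> \<partial>lborel) \<le> ennreal ?C * ennreal d"
            unfolding dd by (rule int_f_bound) simp
          also have "\<dots> = ennreal (?C * d)" using d Dge by (simp add: ennreal_mult)
          also have "\<dots> \<le> ennreal e"
            using d C by (intro ennreal_leI) (simp add: pos_less_divide_eq mult.commute less_imp_le)
          finally show "(\<integral>\<^sup>+ x. indicator ?K x * ennreal \<bar>f x\<bar> \<partial>lborel) \<le> 0 + ennreal e" by simp
        qed
        then have "(\<integral>\<^sup>+ x. indicator ?K x * ennreal \<bar>f x\<bar> \<partial>lborel) = 0" by simp
        then show ?thesis by (subst (asm) nn_integral_0_iff_AE) auto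
      qed
      have "AE x in lborel. \<forall>R::nat. indicator (open_cube (0::real^('n::{finite,linorder})) (2 * (real R + 1))) x * ennreal \<bar>f x\<bar> = 0"
        by (rule AE_all_countable[THEN iffD2]) (use hR in blast)
      then show ?thesis
      proof (rule eventually_mono)
        fix x assume h: "\<forall>R::nat. indicator (open_cube (0::real^('n::{finite,linorder})) (2 * (real R + 1))) x * ennreal \<bar>f x\<bar> = 0"
        obtain R :: nat where "x \<in> open_cube (0::real^('n::{finite,linorder})) (2 * (real R + 1))"
          using in_some_cube' by blast
        then show "f x = 0" using h[rule_format, of R] by simp
      qed
    qed
    then have "AE x in lborel. (((\<lambda>Q::(real^('n::{finite,linorder})) set. (0::real) * (0::real)) has_sum f x) dyadic_cubes)"
      by (rule eventually_mono) simp
    then show ?thesis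
      using zero_block[OF p] True by (intro exI[of _ "\<lambda>_. 0"] exI[of _ "\<lambda>_ _. 0"]) auto
  next
    case False
    then have pos: "block_norm p0 p f > 0" using bn0 by simp
    then have "Inf D < 2 * block_norm p0 p f" by (simp add: bn)
    then obtain d where d: "d \<in> D" "d < 2 * block_norm p0 p f" using cInf_lessD[OF Dne] by blast
    then obtain lam b where dec: "block_decomp p0 p f lam b" and dd: "d = (\<Sum>i. \<bar>lam i\<bar>)"
      by (auto simp: D_def)
    interpret dec p0 p f lam b using p0 p cond dec by unfold_locales
    define DC :: "int \<times> (int^('n::{finite,linorder})) \<Rightarrow> (real^('n::{finite,linorder})) set" where "DC \<kappa> = dyadic_cube (fst \<kappa>) (snd \<kappa>)" for \<kappa>
    have injDC: "inj DC"
      by (auto simp: inj_def DC_def dest: dyadic_inj)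
    have rng: "dyadic_cubes = range DC"
      by (auto simp: dyadic_cubes_def DC_def image_def)
    define L where "L Q = LK (inv DC Q)" for Q
    define B where "B Q = BK (inv DC Q)" for Q
    have LDC: "L (DC \<kappa>) = LK \<kappa>" for \<kappa> by (simp add: L_def injDC)
    have BDC: "B (DC \<kappa>) = BK \<kappa>" for \<kappa> by (simp add: B_def injDC)
    have hs: "(L has_sum (3 ^ CARD('n) * (\<Sum>i. \<bar>lam i\<bar>))) dyadic_cubes"
      unfolding rng using LK_has_sum by (simp add: has_sum_reindex[OF injDC] comp_def LDC)
    have 1: "\<forall>Q\<in>dyadic_cubes. L Q \<ge> 0"
      unfolding rng using LK_nonneg by (auto simp: LDC)
    have 2: "L summable_on dyadic_cubes" using hs by (rule has_sum_imp_summable)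
    have 3: "infsum L dyadic_cubes \<le> 2 * 3 ^ CARD('n) * block_norm p0 p f"
      using infsumI[OF hs] d dd by simp
    have 4: "\<forall>k m. block_on p0 p (open_cube (dyadic_center k m) (3 * 2 powr (- k))) (B (dyadic_cube k m))"
    proof -
      have BDC': "B (dyadic_cube k m) = BK (k, m)" for k m using BDC[of "(k, m)"] by (simp add: DC_def)
      show ?thesis using BK_block by (simp add: BDC')
    qed
    have 5: "AE x in lborel. ((\<lambda>Q. L Q * B Q x) has_sum f x) dyadic_cubes"
      using AE_has_sum
    proof (rule eventually_mono)
      fix x assume "((\<lambda>\<kappa>. LK \<kappa> * BK \<kappa> x) has_sum f x) UNIV"
      then show "((\<lambda>Q. L Q * B Q x) has_sum f x) dyadic_cubes"
        unfolding rng by (simp add: has_sum_reindex[OF injDC] comp_def LDC BDC)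
    qed
    show ?thesis using 1 2 3 4 5 by blast
  qed
qed


end
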